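(* Let $M=\{u=F(z,\zeta,\bar z,\bar\zeta)\}\subset\mathbb{C}^3$ be a rigid real-analytic hypersurface through the origin whose Levi form has constant rank $1$ near $0$ (i.e. $F_{z\bar z}F_{\zeta\bar\zeta}-F_{\zeta\bar z}F_{z\bar\zeta}\equiv0$), and which is prenormalized, i.e. $F(z,\zeta,\bar z,0)=z\bar z+\frac12\zeta\bar z^2+O_{\bar z}(3)$. Let $m:=\frac{z\bar z+\frac12z^2\bar\zeta+\frac12\bar z^2\zeta}{1-\zeta\bar\zeta}$ and $G:=F-m$. Then $G=O_{z,\bar z}(3)$, i.e. every monomial $z^a\zeta^b\bar z^c\bar\zeta^d$ occurring in the Taylor expansion of $G$ at $0$ has $a+c\geq3$.
   Context: Coordinates on $\mathbb{C}^3$ are $(z,\zeta,w)$, $w=u+iv$; $F$ is real-valued. $O_{\bar z}(3)$ denotes $\bar z^3\cdot(\text{convergent power series in }(z,\zeta,\bar z,\bar\zeta))$. *)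

theory Defs
  imports "HOL-Analysis.Analysis"
begin

text \<open>Coefficients of a power series in four complex variables
  (z, zeta, w, omega); w and omega play the roles of conj z and conj zeta.\<close>
type_synonym coeffs4 = "nat \<Rightarrow> nat \<Rightarrow> nat \<Rightarrow> nat \<Rightarrow> complex"

definition mon4 :: "coeffs4 \<Rightarrow> complex \<Rightarrow> complex \<Rightarrow> complex \<Rightarrow> complex
    \<Rightarrow> nat \<times> nat \<times> nat \<times> nat \<Rightarrow> complex" where
  "mon4 c z \<zeta> w \<omega> = (\<lambda>(a,b,e,d). c a b e d * z ^ a * \<zeta> ^ b * w ^ e * \<omega> ^ d)"

definition conv_on :: "coeffs4 \<Rightarrow> real \<Rightarrow> bool" where
  "conv_on c r \<longleftrightarrow> r > 0 \<and>
     (\<forall>z \<zeta> w \<omega>. norm z < r \<and> norm \<zeta> < r \<and> norm w < r \<and> norm \<omega> < r \<longrightarrow>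
        (\<lambda>k. norm (mon4 c z \<zeta> w \<omega> k)) summable_on UNIV)"

definition pser4 :: "coeffs4 \<Rightarrow> complex \<Rightarrow> complex \<Rightarrow> complex \<Rightarrow> complex \<Rightarrow> complex" where
  "pser4 c z \<zeta> w \<omega> = infsum (mon4 c z \<zeta> w \<omega>) UNIV"

text \<open>For
  F(z,zeta) = Phi(z,zeta,conj z,conj zeta) these are the Wirtinger derivatives:
  F_{z zbar} = d1d3 Phi, F_{zeta zetabar} = d2d4 Phi, F_{zeta zbar} = d2d3 Phi,
  F_{z zetabar} = d1d4 Phi.\<close>
definition d13 :: "(complex \<Rightarrow> complex \<Rightarrow> complex \<Rightarrow> complex \<Rightarrow> complex) \<Rightarrow> complex \<Rightarrow> complex \<Rightarrow> complex" where
  "d13 \<Phi> z \<zeta> = deriv (\<lambda>s. deriv (\<lambda>t. \<Phi> t \<zeta> s (cnj \<zeta>)) z) (cnj z)"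
definition d24 :: "(complex \<Rightarrow> complex \<Rightarrow> complex \<Rightarrow> complex \<Rightarrow> complex) \<Rightarrow> complex \<Rightarrow> complex \<Rightarrow> complex" where
  "d24 \<Phi> z \<zeta> = deriv (\<lambda>s. deriv (\<lambda>t. \<Phi> z t (cnj z) s) \<zeta>) (cnj \<zeta>)"
definition d23 :: "(complex \<Rightarrow> complex \<Rightarrow> complex \<Rightarrow> complex \<Rightarrow> complex) \<Rightarrow> complex \<Rightarrow> complex \<Rightarrow> complex" where
  "d23 \<Phi> z \<zeta> = deriv (\<lambda>s. deriv (\<lambda>t. \<Phi> z t s (cnj \<zeta>)) \<zeta>) (cnj z)"
definition d14 :: "(complex \<Rightarrow> complex \<Rightarrow> complex \<Rightarrow> complex \<Rightarrow> complex) \<Rightarrow> complex \<Rightarrow> complex \<Rightarrow> complex" where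
  "d14 \<Phi> z \<zeta> = deriv (\<lambda>s. deriv (\<lambda>t. \<Phi> t \<zeta> (cnj z) s) z) (cnj \<zeta>)"

definition mfun :: "complex \<Rightarrow> complex \<Rightarrow> complex" where
  "mfun z \<zeta> = (z * cnj z + z^2 * cnj \<zeta> / 2 + (cnj z)^2 * \<zeta> / 2) / (1 - \<zeta> * cnj \<zeta>)"

end

theory Submission
  imports Defs "HOL-Complex_Analysis.Complex_Analysis"
begin

definition d1 :: "coeffs4 \<Rightarrow> coeffs4" where
  "d1 c = (\<lambda>a b e d. of_nat (Suc a) * c (Suc a) b e d)"
definition d2 :: "coeffs4 \<Rightarrow> coeffs4" where
  "d2 c = (\<lambda>a b e d. of_nat (Suc b) * c a (Suc b) e d)"
definition d3 :: "coeffs4 \<Rightarrow> coeffs4" where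
  "d3 c = (\<lambda>a b e d. of_nat (Suc e) * c a b (Suc e) d)"
definition d4 :: "coeffs4 \<Rightarrow> coeffs4" where
  "d4 c = (\<lambda>a b e d. of_nat (Suc d) * c a b e (Suc d))"

definition sw2 :: "coeffs4 \<Rightarrow> coeffs4" where "sw2 c = (\<lambda>a b e d. c b a e d)"
definition sw3 :: "coeffs4 \<Rightarrow> coeffs4" where "sw3 c = (\<lambda>a b e d. c e b a d)"
definition sw4 :: "coeffs4 \<Rightarrow> coeffs4" where "sw4 c = (\<lambda>a b e d. c d b e a)"

lemma perm_lemma:
  fixes \<sigma> :: "nat\<times>nat\<times>nat\<times>nat \<Rightarrow> nat\<times>nat\<times>nat\<times>nat"
  assumes inv: "\<And>k. \<sigma> (\<sigma> k) = k"
    and eq: "\<And>k. mon4 c' z' \<zeta>' w' \<omega>' k = mon4 c z \<zeta> w \<omega> (\<sigma> k)"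
  shows "infsum (mon4 c' z' \<zeta>' w' \<omega>') UNIV = infsum (mon4 c z \<zeta> w \<omega>) UNIV"
    and "(\<lambda>k. norm (mon4 c' z' \<zeta>' w' \<omega>' k)) summable_on UNIV \<longleftrightarrow>
         (\<lambda>k. norm (mon4 c z \<zeta> w \<omega> k)) summable_on UNIV"
  by (rule infsum_reindex_bij_witness[of UNIV \<sigma> \<sigma>]; simp add: inv eq)
     (rule summable_on_reindex_bij_witness[of UNIV \<sigma> \<sigma>]; simp add: inv eq)

lemma sw2_pser: "pser4 (sw2 c) \<zeta> z w \<omega> = pser4 c z \<zeta> w \<omega>"
  unfolding pser4_def
  by (rule perm_lemma(1)[where \<sigma>="\<lambda>(a,b,e,d). (b,a,e,d)"]) (auto simp: mon4_def sw2_def mult_ac)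

lemma sw3_pser: "pser4 (sw3 c) w \<zeta> z \<omega> = pser4 c z \<zeta> w \<omega>"
  unfolding pser4_def
  by (rule perm_lemma(1)[where \<sigma>="\<lambda>(a,b,e,d). (e,b,a,d)"]) (auto simp: mon4_def sw3_def mult_ac)
lemma sw4_pser: "pser4 (sw4 c) \<omega> \<zeta> w z = pser4 c z \<zeta> w \<omega>"
  unfolding pser4_def
  by (rule perm_lemma(1)[where \<sigma>="\<lambda>(a,b,e,d). (d,b,e,a)"]) (auto simp: mon4_def sw4_def mult_ac)

lemma sw2_conv: "conv_on (sw2 c) r \<longleftrightarrow> conv_on c r"
proof -
  have "(\<lambda>k. norm (mon4 (sw2 c) \<zeta> z w \<omega> k)) summable_on UNIV \<longleftrightarrow>
        (\<lambda>k. norm (mon4 c z \<zeta> w \<omega> k)) summable_on UNIV" for z \<zeta> w \<omega>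
    by (rule perm_lemma(2)[where \<sigma>="\<lambda>(a,b,e,d). (b,a,e,d)"]) (auto simp: mon4_def sw2_def mult_ac)
  then show ?thesis unfolding conv_on_def by metis
qed
lemma sw3_conv: "conv_on (sw3 c) r \<longleftrightarrow> conv_on c r"
proof -
  have "(\<lambda>k. norm (mon4 (sw3 c) w \<zeta> z \<omega> k)) summable_on UNIV \<longleftrightarrow>
        (\<lambda>k. norm (mon4 c z \<zeta> w \<omega> k)) summable_on UNIV" for z \<zeta> w \<omega>
    by (rule perm_lemma(2)[where \<sigma>="\<lambda>(a,b,e,d). (e,b,a,d)"]) (auto simp: mon4_def sw3_def mult_ac)
  then show ?thesis unfolding conv_on_def by metis
qed
lemma sw4_conv: "conv_on (sw4 c) r \<longleftrightarrow> conv_on c r"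
proof -
  have "(\<lambda>k. norm (mon4 (sw4 c) \<omega> \<zeta> w z k)) summable_on UNIV \<longleftrightarrow>
        (\<lambda>k. norm (mon4 c z \<zeta> w \<omega> k)) summable_on UNIV" for z \<zeta> w \<omega>
    by (rule perm_lemma(2)[where \<sigma>="\<lambda>(a,b,e,d). (d,b,e,a)"]) (auto simp: mon4_def sw4_def mult_ac)
  then show ?thesis unfolding conv_on_def by metis
qed

lemma sw_inv[simp]: "sw2 (sw2 c) = c" "sw3 (sw3 c) = c" "sw4 (sw4 c) = c"
  by (simp_all add: sw2_def sw3_def sw4_def)

lemma d2_sw: "d2 c = sw2 (d1 (sw2 c))"
  by (simp add: d1_def d2_def sw2_def)
lemma d3_sw: "d3 c = sw3 (d1 (sw3 c))"
  by (simp add: d1_def d3_def sw3_def)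
lemma d4_sw: "d4 c = sw4 (d1 (sw4 c))"
  by (simp add: d1_def d4_def sw4_def)

definition C1 :: "coeffs4 \<Rightarrow> complex \<Rightarrow> complex \<Rightarrow> complex \<Rightarrow> nat \<Rightarrow> complex" where
  "C1 c \<zeta> w \<omega> a = infsum (\<lambda>(b,e,d). c a b e d * \<zeta>^b * w^e * \<omega>^d) UNIV"

lemma RG1:
  assumes sm: "(\<lambda>k. norm (mon4 c z \<zeta> w \<omega> k)) summable_on UNIV"
  shows "(\<lambda>a. C1 c \<zeta> w \<omega> a * z^a) sums pser4 c z \<zeta> w \<omega>"
proof -
  let ?f = "mon4 c z \<zeta> w \<omega>"
  have abs: "(\<lambda>k. norm (?f k)) summable_on Sigma UNIV (\<lambda>_. UNIV)" using sm by simp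
  hence inner: "(\<lambda>t. norm (?f (a,t))) summable_on UNIV" for a
    using Infinite_Sum.abs_summable_on_Sigma_iff[of ?f UNIV "\<lambda>_. UNIV"] abs by blast
  have "?f summable_on Sigma UNIV (\<lambda>_. UNIV)"
    using abs abs_summable_summable by (metis (no_types))
  hence hs: "(?f has_sum pser4 c z \<zeta> w \<omega>) (Sigma UNIV (\<lambda>_. UNIV))"
    unfolding pser4_def using has_sum_infsum[OF \<open>?f summable_on Sigma UNIV (\<lambda>_. UNIV)\<close>] by simp
  have inn: "((\<lambda>t. ?f (a,t)) has_sum (C1 c \<zeta> w \<omega> a * z^a)) UNIV" for a
  proof -
    have "(\<lambda>t. ?f (a,t)) summable_on UNIV" using inner[of a] abs_summable_summable by (metis (no_types))
    hence "((\<lambda>t. ?f (a,t)) has_sum infsum (\<lambda>t. ?f (a,t)) UNIV) UNIV" by (rule has_sum_infsum)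
    moreover have "infsum (\<lambda>t. ?f (a,t)) UNIV = C1 c \<zeta> w \<omega> a * z^a"
    proof -
      have "(\<lambda>t. ?f (a,t)) = (\<lambda>t. (\<lambda>(b,e,d). c a b e d * \<zeta>^b * w^e * \<omega>^d) t * z^a)"
        by (auto simp: mon4_def mult_ac)
      thus ?thesis unfolding C1_def by (simp add: infsum_cmult_left')
    qed
    ultimately show ?thesis by simp
  qed
  have "((\<lambda>a. C1 c \<zeta> w \<omega> a * z^a) has_sum pser4 c z \<zeta> w \<omega>) UNIV"
    by (rule has_sum_Sigma'[OF hs inn])
  thus ?thesis by (rule has_sum_imp_sums)
qed

lemma bound_lin:
  fixes q :: real assumes q: "0 < q" "q < 1"
  shows "\<exists>B. \<forall>n. real (Suc n) * q^n \<le> B"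
proof -
  have "(\<lambda>n. of_nat n * q^n) \<longlonglongrightarrow> 0"
    by (rule powser_times_n_limit_0) (use q in simp)
  hence "(\<lambda>n. of_nat (Suc n) * q^(Suc n)) \<longlonglongrightarrow> 0"
    by (rule LIMSEQ_Suc)
  hence "Bseq (\<lambda>n. of_nat (Suc n) * q^(Suc n))"
    using convergent_imp_Bseq convergentI by blast
  then obtain K where K: "\<And>n. norm (of_nat (Suc n) * q^(Suc n)) \<le> K"
    using BseqE by blast
  have "real (Suc n) * q^n \<le> K / q" for n
  proof -
    have "real (Suc n) * q^n * q \<le> K" using K[of n] q by (simp add: mult_ac)
    thus ?thesis using q by (simp add: field_simps)
  qed
  thus ?thesis by blast
qed

lemma mon4_norm:
  "norm (mon4 c z \<zeta> w \<omega> (a,b,e,d)) = norm (c a b e d) * norm z ^ a * norm \<zeta> ^ b * norm w ^ e * norm \<omega> ^ d"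
  by (simp add: mon4_def norm_mult norm_power)

lemma conv_on_pos: "conv_on c r \<Longrightarrow> r > 0" by (simp add: conv_on_def)

lemma conv_d1:
  assumes cv: "conv_on c r"
  shows "conv_on (d1 c) r"
  unfolding conv_on_def
proof (intro conjI allI impI)
  show "r > 0" using cv conv_on_pos by blast
  fix z \<zeta> w \<omega> :: complex
  assume n: "norm z < r \<and> norm \<zeta> < r \<and> norm w < r \<and> norm \<omega> < r"
  define K where "K = (norm z + r) / 2"
  define K1 where "K1 = (norm z + K) / 2"
  have K: "norm z < K" "K < r" "0 < K" using n norm_ge_zero[of z] unfolding K_def by (auto simp del: norm_ge_zero)
  have K1: "norm z < K1" "K1 < K" "0 < K1" using K norm_ge_zero[of z] unfolding K1_def by (auto simp del: norm_ge_zero)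
  obtain B where B: "\<And>n. real (Suc n) * (K1/K)^n \<le> B"
    using bound_lin[of "K1/K"] K K1 by auto
  have B0: "0 \<le> B" using B[of 0] by simp
  let ?g = "\<lambda>k. norm (mon4 c (of_real K) \<zeta> w \<omega> k)"
  have sg: "?g summable_on UNIV" using cv K n unfolding conv_on_def by auto
  let ?h = "\<lambda>(a::nat,b::nat,e::nat,d::nat). (Suc a,b,e,d)"
  have inj: "inj_on ?h UNIV" by (auto simp: inj_on_def)
  have "?g summable_on (?h ` UNIV)" using sg summable_on_subset_banach by blast
  hence "(?g \<circ> ?h) summable_on UNIV" using summable_on_reindex[OF inj] by blast
  hence s2: "(\<lambda>k. (B / K) * (?g \<circ> ?h) k) summable_on UNIV" by (rule summable_on_cmult_right)
  show "(\<lambda>k. norm (mon4 (d1 c) z \<zeta> w \<omega> k)) summable_on UNIV"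
  proof (rule summable_on_comparison_test[OF s2])
    fix k :: "nat\<times>nat\<times>nat\<times>nat"
    obtain a b e d where kk: "k = (a,b,e,d)" by (cases k) auto
    have "norm z ^ a \<le> K1 ^ a" using K1 by (intro power_mono) auto
    hence "real (Suc a) * norm z ^ a \<le> real (Suc a) * K1 ^ a" by simp
    also have "\<dots> = real (Suc a) * (K1/K)^a * K^a" using K by (simp add: power_divide)
    also have "\<dots> \<le> B * K^a" using B[of a] K by (intro mult_right_mono) auto
    finally have st: "real (Suc a) * norm z ^ a \<le> B / K * K ^ Suc a" using K by simp
    have "norm (mon4 (d1 c) z \<zeta> w \<omega> k) =
          (real (Suc a) * norm z ^ a) * (norm (c (Suc a) b e d) * norm \<zeta> ^ b * norm w ^ e * norm \<omega> ^ d)"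
      by (simp add: kk mon4_norm d1_def norm_mult mult_ac del: of_nat_Suc)
    also have "\<dots> \<le> (B / K * K ^ Suc a) * (norm (c (Suc a) b e d) * norm \<zeta> ^ b * norm w ^ e * norm \<omega> ^ d)"
      by (intro mult_right_mono st) auto
    also have "\<dots> = (B / K) * (?g \<circ> ?h) k"
      using K by (simp add: kk mon4_norm mult_ac)
    finally show "norm (mon4 (d1 c) z \<zeta> w \<omega> k) \<le> (B / K) * (?g \<circ> ?h) k" .
  qed auto
qed

lemma conv_sw2_d: "conv_on c r \<Longrightarrow> conv_on (d2 c) r"
  by (simp add: d2_sw sw2_conv conv_d1)
lemma conv_sw3_d: "conv_on c r \<Longrightarrow> conv_on (d3 c) r"
  by (simp add: d3_sw sw3_conv conv_d1)
lemma conv_sw4_d: "conv_on c r \<Longrightarrow> conv_on (d4 c) r"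
  by (simp add: d4_sw sw4_conv conv_d1)

lemma conv_sm: "conv_on c r \<Longrightarrow> norm z < r \<Longrightarrow> norm \<zeta> < r \<Longrightarrow> norm w < r \<Longrightarrow> norm \<omega> < r \<Longrightarrow>
   (\<lambda>k. norm (mon4 c z \<zeta> w \<omega> k)) summable_on UNIV"
  by (simp add: conv_on_def)

lemma L1:
  assumes cv: "conv_on c r" and n: "norm z < r" "norm \<zeta> < r" "norm w < r" "norm \<omega> < r"
  shows "((\<lambda>t. pser4 c t \<zeta> w \<omega>) has_field_derivative pser4 (d1 c) z \<zeta> w \<omega>) (at z)"
proof -
  define K where "K = (norm z + r) / 2"
  have K: "norm z < K" "K < r" "0 < K" using n norm_ge_zero[of z] unfolding K_def by (auto simp del: norm_ge_zero)
  have "(\<lambda>a. C1 c \<zeta> w \<omega> a * (of_real K)^a) sums pser4 c (of_real K) \<zeta> w \<omega>"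
    by (rule RG1, rule conv_sm[OF cv]) (use K n in auto)
  hence sm: "summable (\<lambda>a. C1 c \<zeta> w \<omega> a * (of_real K)^a)" by (rule sums_summable)
  have D: "((\<lambda>x. \<Sum>a. C1 c \<zeta> w \<omega> a * x^a) has_field_derivative
          (\<Sum>a. diffs (C1 c \<zeta> w \<omega>) a * z^a)) (at z)"
    by (rule termdiffs_strong[OF sm]) (use K in simp)
  have dd: "diffs (C1 c \<zeta> w \<omega>) = C1 (d1 c) \<zeta> w \<omega>"
  proof
    fix a
    have "C1 (d1 c) \<zeta> w \<omega> a = infsum (\<lambda>x. of_nat (Suc a) * (\<lambda>(b,e,d). c (Suc a) b e d * \<zeta>^b * w^e * \<omega>^d) x) UNIV"
      unfolding C1_def d1_def by (intro infsum_cong) (auto simp: mult_ac)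
    also have "\<dots> = of_nat (Suc a) * C1 c \<zeta> w \<omega> (Suc a)"
      unfolding C1_def by (rule infsum_cmult_right')
    finally show "diffs (C1 c \<zeta> w \<omega>) a = C1 (d1 c) \<zeta> w \<omega> a" by (simp add: diffs_def)
  qed
  have "(\<lambda>a. C1 (d1 c) \<zeta> w \<omega> a * z^a) sums pser4 (d1 c) z \<zeta> w \<omega>"
    by (rule RG1, rule conv_sm[OF conv_d1[OF cv]]) (use n in auto)
  hence v1: "(\<Sum>a. diffs (C1 c \<zeta> w \<omega>) a * z^a) = pser4 (d1 c) z \<zeta> w \<omega>"
    using dd sums_unique by metis
  have ev: "\<And>x. x \<in> ball 0 r \<Longrightarrow> (\<Sum>a. C1 c \<zeta> w \<omega> a * x^a) = pser4 c x \<zeta> w \<omega>"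
  proof -
    fix x :: complex assume "x \<in> ball 0 r"
    hence "norm x < r" by simp
    hence "(\<lambda>a. C1 c \<zeta> w \<omega> a * x^a) sums pser4 c x \<zeta> w \<omega>"
      by (intro RG1 conv_sm[OF cv]) (use n in auto)
    thus "(\<Sum>a. C1 c \<zeta> w \<omega> a * x^a) = pser4 c x \<zeta> w \<omega>" using sums_unique by metis
  qed
  show ?thesis
    by (rule has_field_derivative_transform_within_open[OF D[unfolded v1], of "ball 0 r"])
       (use n ev in auto)
qed

lemma L2:
  assumes cv: "conv_on c r" and n: "norm z < r" "norm \<zeta> < r" "norm w < r" "norm \<omega> < r"
  shows "((\<lambda>t. pser4 c z t w \<omega>) has_field_derivative pser4 (d2 c) z \<zeta> w \<omega>) (at \<zeta>)"
proof -
  have "((\<lambda>t. pser4 (sw2 c) t z w \<omega>) has_field_derivative pser4 (d1 (sw2 c)) \<zeta> z w \<omega>) (at \<zeta>)"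
    by (rule L1) (use cv n sw2_conv in auto)
  moreover have "(\<lambda>t. pser4 (sw2 c) t z w \<omega>) = (\<lambda>t. pser4 c z t w \<omega>)" by (simp add: sw2_pser)
  moreover have "pser4 (d1 (sw2 c)) \<zeta> z w \<omega> = pser4 (d2 c) z \<zeta> w \<omega>"
    by (metis d2_sw sw2_pser)
  ultimately show ?thesis by simp
qed

lemma L3:
  assumes cv: "conv_on c r" and n: "norm z < r" "norm \<zeta> < r" "norm w < r" "norm \<omega> < r"
  shows "((\<lambda>t. pser4 c z \<zeta> t \<omega>) has_field_derivative pser4 (d3 c) z \<zeta> w \<omega>) (at w)"
proof -
  have "((\<lambda>t. pser4 (sw3 c) t \<zeta> z \<omega>) has_field_derivative pser4 (d1 (sw3 c)) w \<zeta> z \<omega>) (at w)"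
    by (rule L1) (use cv n sw3_conv in auto)
  moreover have "(\<lambda>t. pser4 (sw3 c) t \<zeta> z \<omega>) = (\<lambda>t. pser4 c z \<zeta> t \<omega>)" by (simp add: sw3_pser)
  moreover have "pser4 (d1 (sw3 c)) w \<zeta> z \<omega> = pser4 (d3 c) z \<zeta> w \<omega>"
    by (metis d3_sw sw3_pser)
  ultimately show ?thesis by simp
qed

lemma L4:
  assumes cv: "conv_on c r" and n: "norm z < r" "norm \<zeta> < r" "norm w < r" "norm \<omega> < r"
  shows "((\<lambda>t. pser4 c z \<zeta> w t) has_field_derivative pser4 (d4 c) z \<zeta> w \<omega>) (at \<omega>)"
proof -
  have "((\<lambda>t. pser4 (sw4 c) t \<zeta> w z) has_field_derivative pser4 (d1 (sw4 c)) \<omega> \<zeta> w z) (at \<omega>)"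
    by (rule L1) (use cv n sw4_conv in auto)
  moreover have "(\<lambda>t. pser4 (sw4 c) t \<zeta> w z) = (\<lambda>t. pser4 c z \<zeta> w t)" by (simp add: sw4_pser)
  moreover have "pser4 (d1 (sw4 c)) \<omega> \<zeta> w z = pser4 (d4 c) z \<zeta> w \<omega>"
    by (metis d4_sw sw4_pser)
  ultimately show ?thesis by simp
qed

lemma d13_eval:
  assumes cv: "conv_on f r" and n: "norm z < r" "norm \<zeta> < r"
  shows "d13 (pser4 f) z \<zeta> = pser4 (d3 (d1 f)) z \<zeta> (cnj z) (cnj \<zeta>)"
proof -
  have inner: "deriv (\<lambda>t. pser4 f t \<zeta> s (cnj \<zeta>)) z = pser4 (d1 f) z \<zeta> s (cnj \<zeta>)" if "s \<in> ball 0 r" for s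
    by (rule DERIV_imp_deriv, rule L1[OF cv]) (use n that in auto)
  have "((\<lambda>s. pser4 (d1 f) z \<zeta> s (cnj \<zeta>)) has_field_derivative pser4 (d3 (d1 f)) z \<zeta> (cnj z) (cnj \<zeta>)) (at (cnj z))"
    by (rule L3[OF conv_d1[OF cv]]) (use n in auto)
  hence "((\<lambda>s. deriv (\<lambda>t. pser4 f t \<zeta> s (cnj \<zeta>)) z) has_field_derivative pser4 (d3 (d1 f)) z \<zeta> (cnj z) (cnj \<zeta>)) (at (cnj z))"
    by (rule has_field_derivative_transform_within_open[of _ _ _ "ball 0 r"]) (use n inner in auto)
  thus ?thesis unfolding d13_def by (rule DERIV_imp_deriv)
qed

lemma d24_eval:
  assumes cv: "conv_on f r" and n: "norm z < r" "norm \<zeta> < r"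
  shows "d24 (pser4 f) z \<zeta> = pser4 (d4 (d2 f)) z \<zeta> (cnj z) (cnj \<zeta>)"
proof -
  have inner: "deriv (\<lambda>t. pser4 f z t (cnj z) s) \<zeta> = pser4 (d2 f) z \<zeta> (cnj z) s" if "s \<in> ball 0 r" for s
    by (rule DERIV_imp_deriv, rule L2[OF cv]) (use n that in auto)
  have "((\<lambda>s. pser4 (d2 f) z \<zeta> (cnj z) s) has_field_derivative pser4 (d4 (d2 f)) z \<zeta> (cnj z) (cnj \<zeta>)) (at (cnj \<zeta>))"
    by (rule L4[OF conv_sw2_d[OF cv]]) (use n in auto)
  hence "((\<lambda>s. deriv (\<lambda>t. pser4 f z t (cnj z) s) \<zeta>) has_field_derivative pser4 (d4 (d2 f)) z \<zeta> (cnj z) (cnj \<zeta>)) (at (cnj \<zeta>))"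
    by (rule has_field_derivative_transform_within_open[of _ _ _ "ball 0 r"]) (use n inner in auto)
  thus ?thesis unfolding d24_def by (rule DERIV_imp_deriv)
qed

lemma d23_eval:
  assumes cv: "conv_on f r" and n: "norm z < r" "norm \<zeta> < r"
  shows "d23 (pser4 f) z \<zeta> = pser4 (d3 (d2 f)) z \<zeta> (cnj z) (cnj \<zeta>)"
proof -
  have inner: "deriv (\<lambda>t. pser4 f z t s (cnj \<zeta>)) \<zeta> = pser4 (d2 f) z \<zeta> s (cnj \<zeta>)" if "s \<in> ball 0 r" for s
    by (rule DERIV_imp_deriv, rule L2[OF cv]) (use n that in auto)
  have "((\<lambda>s. pser4 (d2 f) z \<zeta> s (cnj \<zeta>)) has_field_derivative pser4 (d3 (d2 f)) z \<zeta> (cnj z) (cnj \<zeta>)) (at (cnj z))"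
    by (rule L3[OF conv_sw2_d[OF cv]]) (use n in auto)
  hence "((\<lambda>s. deriv (\<lambda>t. pser4 f z t s (cnj \<zeta>)) \<zeta>) has_field_derivative pser4 (d3 (d2 f)) z \<zeta> (cnj z) (cnj \<zeta>)) (at (cnj z))"
    by (rule has_field_derivative_transform_within_open[of _ _ _ "ball 0 r"]) (use n inner in auto)
  thus ?thesis unfolding d23_def by (rule DERIV_imp_deriv)
qed

lemma d14_eval:
  assumes cv: "conv_on f r" and n: "norm z < r" "norm \<zeta> < r"
  shows "d14 (pser4 f) z \<zeta> = pser4 (d4 (d1 f)) z \<zeta> (cnj z) (cnj \<zeta>)"
proof -
  have inner: "deriv (\<lambda>t. pser4 f t \<zeta> (cnj z) s) z = pser4 (d1 f) z \<zeta> (cnj z) s" if "s \<in> ball 0 r" for s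
    by (rule DERIV_imp_deriv, rule L1[OF cv]) (use n that in auto)
  have "((\<lambda>s. pser4 (d1 f) z \<zeta> (cnj z) s) has_field_derivative pser4 (d4 (d1 f)) z \<zeta> (cnj z) (cnj \<zeta>)) (at (cnj \<zeta>))"
    by (rule L4[OF conv_d1[OF cv]]) (use n in auto)
  hence "((\<lambda>s. deriv (\<lambda>t. pser4 f t \<zeta> (cnj z) s) z) has_field_derivative pser4 (d4 (d1 f)) z \<zeta> (cnj z) (cnj \<zeta>)) (at (cnj \<zeta>))"
    by (rule has_field_derivative_transform_within_open[of _ _ _ "ball 0 r"]) (use n inner in auto)
  thus ?thesis unfolding d14_def by (rule DERIV_imp_deriv)
qed

definition poly4 :: "real \<Rightarrow> complex \<Rightarrow> complex \<Rightarrow> complex \<Rightarrow> complex \<Rightarrow> bool" where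
  "poly4 r z \<zeta> w \<omega> \<longleftrightarrow> norm z < r \<and> norm \<zeta> < r \<and> norm w < r \<and> norm \<omega> < r"

lemma DU1:
  assumes cv: "conv_on c r" and eq: "\<And>z \<zeta> w \<omega>. poly4 r z \<zeta> w \<omega> \<Longrightarrow> pser4 c z \<zeta> w \<omega> = h z \<zeta> w \<omega>"
    and dh: "\<And>z \<zeta> w \<omega>. poly4 r z \<zeta> w \<omega> \<Longrightarrow> ((\<lambda>t. h t \<zeta> w \<omega>) has_field_derivative h' z \<zeta> w \<omega>) (at z)"
    and p: "poly4 r z \<zeta> w \<omega>"
  shows "pser4 (d1 c) z \<zeta> w \<omega> = h' z \<zeta> w \<omega>"
proof -
  have "((\<lambda>t. pser4 c t \<zeta> w \<omega>) has_field_derivative pser4 (d1 c) z \<zeta> w \<omega>) (at z)"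
    using L1[OF cv] p unfolding poly4_def by blast
  hence "((\<lambda>t. h t \<zeta> w \<omega>) has_field_derivative pser4 (d1 c) z \<zeta> w \<omega>) (at z)"
    by (rule has_field_derivative_transform_within_open[of _ _ _ "ball 0 r"]) (use p eq in \<open>auto simp: poly4_def\<close>)
  thus ?thesis using dh[OF p] DERIV_unique by blast
qed

lemma DU2:
  assumes cv: "conv_on c r" and eq: "\<And>z \<zeta> w \<omega>. poly4 r z \<zeta> w \<omega> \<Longrightarrow> pser4 c z \<zeta> w \<omega> = h z \<zeta> w \<omega>"
    and dh: "\<And>z \<zeta> w \<omega>. poly4 r z \<zeta> w \<omega> \<Longrightarrow> ((\<lambda>t. h z t w \<omega>) has_field_derivative h' z \<zeta> w \<omega>) (at \<zeta>)"
    and p: "poly4 r z \<zeta> w \<omega>"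
  shows "pser4 (d2 c) z \<zeta> w \<omega> = h' z \<zeta> w \<omega>"
proof -
  have "((\<lambda>t. pser4 c z t w \<omega>) has_field_derivative pser4 (d2 c) z \<zeta> w \<omega>) (at \<zeta>)"
    using L2[OF cv] p unfolding poly4_def by blast
  hence "((\<lambda>t. h z t w \<omega>) has_field_derivative pser4 (d2 c) z \<zeta> w \<omega>) (at \<zeta>)"
    by (rule has_field_derivative_transform_within_open[of _ _ _ "ball 0 r"]) (use p eq in \<open>auto simp: poly4_def\<close>)
  thus ?thesis using dh[OF p] DERIV_unique by blast
qed

lemma DU3:
  assumes cv: "conv_on c r" and eq: "\<And>z \<zeta> w \<omega>. poly4 r z \<zeta> w \<omega> \<Longrightarrow> pser4 c z \<zeta> w \<omega> = h z \<zeta> w \<omega>"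
    and dh: "\<And>z \<zeta> w \<omega>. poly4 r z \<zeta> w \<omega> \<Longrightarrow> ((\<lambda>t. h z \<zeta> t \<omega>) has_field_derivative h' z \<zeta> w \<omega>) (at w)"
    and p: "poly4 r z \<zeta> w \<omega>"
  shows "pser4 (d3 c) z \<zeta> w \<omega> = h' z \<zeta> w \<omega>"
proof -
  have "((\<lambda>t. pser4 c z \<zeta> t \<omega>) has_field_derivative pser4 (d3 c) z \<zeta> w \<omega>) (at w)"
    using L3[OF cv] p unfolding poly4_def by blast
  hence "((\<lambda>t. h z \<zeta> t \<omega>) has_field_derivative pser4 (d3 c) z \<zeta> w \<omega>) (at w)"
    by (rule has_field_derivative_transform_within_open[of _ _ _ "ball 0 r"]) (use p eq in \<open>auto simp: poly4_def\<close>)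
  thus ?thesis using dh[OF p] DERIV_unique by blast
qed

lemma DU4:
  assumes cv: "conv_on c r" and eq: "\<And>z \<zeta> w \<omega>. poly4 r z \<zeta> w \<omega> \<Longrightarrow> pser4 c z \<zeta> w \<omega> = h z \<zeta> w \<omega>"
    and dh: "\<And>z \<zeta> w \<omega>. poly4 r z \<zeta> w \<omega> \<Longrightarrow> ((\<lambda>t. h z \<zeta> w t) has_field_derivative h' z \<zeta> w \<omega>) (at \<omega>)"
    and p: "poly4 r z \<zeta> w \<omega>"
  shows "pser4 (d4 c) z \<zeta> w \<omega> = h' z \<zeta> w \<omega>"
proof -
  have "((\<lambda>t. pser4 c z \<zeta> w t) has_field_derivative pser4 (d4 c) z \<zeta> w \<omega>) (at \<omega>)"
    using L4[OF cv] p unfolding poly4_def by blast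
  hence "((\<lambda>t. h z \<zeta> w t) has_field_derivative pser4 (d4 c) z \<zeta> w \<omega>) (at \<omega>)"
    by (rule has_field_derivative_transform_within_open[of _ _ _ "ball 0 r"]) (use p eq in \<open>auto simp: poly4_def\<close>)
  thus ?thesis using dh[OF p] DERIV_unique by blast
qed

type_synonym idx = "nat\<times>nat\<times>nat\<times>nat"

definition L4 :: "idx \<Rightarrow> idx set" where
  "L4 = (\<lambda>(a,b,e,d). {..a} \<times> {..b} \<times> {..e} \<times> {..d})"
definition sub4 :: "idx \<Rightarrow> idx \<Rightarrow> idx" where
  "sub4 = (\<lambda>(a,b,e,d) (a1,b1,e1,d1). (a-a1,b-b1,e-e1,d-d1))"
definition add4 :: "idx \<Rightarrow> idx \<Rightarrow> idx" where
  "add4 = (\<lambda>(a,b,e,d) (a1,b1,e1,d1). (a+a1,b+b1,e+e1,d+d1))"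

lemma finite_L4: "finite (L4 k)"
  by (cases k) (auto simp: L4_def)

lemma prod_has_sum:
  fixes p q :: "idx \<Rightarrow> 'a::{real_normed_field,banach}"
  assumes p: "(\<lambda>k. norm (p k)) summable_on UNIV" and q: "(\<lambda>k. norm (q k)) summable_on UNIV"
  shows "((\<lambda>(j1,j2). p j1 * q j2) has_sum (infsum p UNIV * infsum q UNIV)) (Sigma UNIV (\<lambda>_. UNIV))"
proof -
  let ?P = "\<lambda>(j1,j2). p j1 * q j2"
  have inner: "\<forall>x\<in>UNIV. (\<lambda>y. norm (?P (x, y))) summable_on UNIV"
    using summable_on_cmult_right[OF q] by (simp add: norm_mult)
  have "(\<lambda>x. infsum (\<lambda>y. norm (?P (x, y))) UNIV) = (\<lambda>x. norm (p x) * infsum (\<lambda>y. norm (q y)) UNIV)"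
    by (simp add: norm_mult infsum_cmult_right')
  hence outer: "(\<lambda>x. norm (infsum (\<lambda>y. norm (?P (x, y))) UNIV)) summable_on UNIV"
    using summable_on_cmult_left[OF p] by (simp add: infsum_nonneg)
  have abs: "(\<lambda>k. norm (?P k)) summable_on Sigma UNIV (\<lambda>_. UNIV)"
    using Infinite_Sum.abs_summable_on_Sigma_iff[of ?P UNIV "\<lambda>_. UNIV"] inner outer by blast
  hence sm: "?P summable_on Sigma UNIV (\<lambda>_. UNIV)" by (rule abs_summable_summable)
  have ps: "p summable_on UNIV" using p abs_summable_summable by blast
  have qs: "q summable_on UNIV" using q abs_summable_summable by blast
  have "infsum ?P (Sigma UNIV (\<lambda>_. UNIV)) = infsum (\<lambda>x. infsum (\<lambda>y. ?P (x,y)) UNIV) UNIV"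
    using infsum_Sigma_banach[OF sm] by simp
  also have "\<dots> = infsum (\<lambda>x. p x * infsum q UNIV) UNIV"
    by (simp add: infsum_cmult_right')
  also have "\<dots> = infsum p UNIV * infsum q UNIV"
    by (simp add: infsum_cmult_left')
  finally show ?thesis using has_sum_infsum[OF sm] by simp
qed

lemma cauchy4:
  fixes p q :: "idx \<Rightarrow> 'a::{real_normed_field,banach}"
  assumes p: "(\<lambda>k. norm (p k)) summable_on UNIV" and q: "(\<lambda>k. norm (q k)) summable_on UNIV"
  shows "((\<lambda>k. \<Sum>j\<in>L4 k. p j * q (sub4 k j)) has_sum (infsum p UNIV * infsum q UNIV)) UNIV"
proof -
  have h1: "((\<lambda>(j1,j2). p j1 * q j2) has_sum (infsum p UNIV * infsum q UNIV)) (Sigma UNIV (\<lambda>_. UNIV))"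
    by (rule prod_has_sum[OF p q])
  have h2: "((\<lambda>(k,j). p j * q (sub4 k j)) has_sum (infsum p UNIV * infsum q UNIV)) (Sigma UNIV L4)"
  proof -
    have "((\<lambda>(k,j). p j * q (sub4 k j)) has_sum (infsum p UNIV * infsum q UNIV)) (Sigma UNIV L4)
       \<longleftrightarrow> ((\<lambda>(j1,j2). p j1 * q j2) has_sum (infsum p UNIV * infsum q UNIV)) (Sigma UNIV (\<lambda>_. UNIV))"
      by (rule has_sum_reindex_bij_witness[where i="\<lambda>(j1,j2). (add4 j1 j2, j1)" and j="\<lambda>(k,j). (j, sub4 k j)"])
         (auto simp: L4_def add4_def sub4_def)
    thus ?thesis using h1 by simp
  qed
  show ?thesis
    by (rule has_sum_SigmaD[OF h2]) (auto intro!: has_sum_finiteI finite_L4)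
qed

definition conv4 :: "coeffs4 \<Rightarrow> coeffs4 \<Rightarrow> coeffs4" where
  "conv4 c d = (\<lambda>a b e k. \<Sum>(a1,b1,e1,k1)\<in>{..a} \<times> {..b} \<times> {..e} \<times> {..k}.
      c a1 b1 e1 k1 * d (a-a1) (b-b1) (e-e1) (k-k1))"

lemma mon4_conv4:
  "mon4 (conv4 c d) z \<zeta> w \<omega> k = (\<Sum>j\<in>L4 k. mon4 c z \<zeta> w \<omega> j * mon4 d z \<zeta> w \<omega> (sub4 k j))"
proof -
  obtain a b e kk where kk: "k = (a,b,e,kk)" by (cases k) auto
  have "mon4 (conv4 c d) z \<zeta> w \<omega> k = (\<Sum>(a1,b1,e1,k1)\<in>{..a} \<times> {..b} \<times> {..e} \<times> {..kk}.
      c a1 b1 e1 k1 * d (a-a1) (b-b1) (e-e1) (kk-k1) * z ^ a * \<zeta> ^ b * w ^ e * \<omega> ^ kk)"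
    by (simp add: kk mon4_def conv4_def sum_distrib_right case_prod_unfold)
  also have "\<dots> = (\<Sum>j\<in>L4 k. mon4 c z \<zeta> w \<omega> j * mon4 d z \<zeta> w \<omega> (sub4 k j))"
    unfolding kk L4_def prod.case
  proof (intro sum.cong refl)
    fix x assume "x \<in> {..a} \<times> {..b} \<times> {..e} \<times> {..kk}"
    then obtain a1 b1 e1 k1 where x: "x = (a1,b1,e1,k1)" and le: "a1 \<le> a" "b1 \<le> b" "e1 \<le> e" "k1 \<le> kk"
      by auto
    from le have "z ^ a = z^a1 * z^(a-a1)" "\<zeta> ^ b = \<zeta>^b1 * \<zeta>^(b-b1)" "w ^ e = w^e1 * w^(e-e1)"
      "\<omega> ^ kk = \<omega>^k1 * \<omega>^(kk-k1)" by (simp_all flip: power_add)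
    thus "(case x of (a1, b1, e1, k1) \<Rightarrow> c a1 b1 e1 k1 * d (a - a1) (b - b1) (e - e1) (kk - k1) * z ^ a * \<zeta> ^ b * w ^ e * \<omega> ^ kk) =
          mon4 c z \<zeta> w \<omega> x * mon4 d z \<zeta> w \<omega> (sub4 (a, b, e, kk) x)"
      by (simp add: x mon4_def sub4_def mult_ac)
  qed
  finally show ?thesis .
qed

lemma conv4_prod:
  assumes c: "conv_on c r" and d: "conv_on d r" and p: "poly4 r z \<zeta> w \<omega>"
  shows "pser4 (conv4 c d) z \<zeta> w \<omega> = pser4 c z \<zeta> w \<omega> * pser4 d z \<zeta> w \<omega>"
    and "(\<lambda>k. norm (mon4 (conv4 c d) z \<zeta> w \<omega> k)) summable_on UNIV"
proof -
  have sc: "(\<lambda>k. norm (mon4 c z \<zeta> w \<omega> k)) summable_on UNIV" using c p by (simp add: conv_on_def poly4_def)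
  have sd: "(\<lambda>k. norm (mon4 d z \<zeta> w \<omega> k)) summable_on UNIV" using d p by (simp add: conv_on_def poly4_def)
  have "((\<lambda>k. \<Sum>j\<in>L4 k. mon4 c z \<zeta> w \<omega> j * mon4 d z \<zeta> w \<omega> (sub4 k j)) has_sum (pser4 c z \<zeta> w \<omega> * pser4 d z \<zeta> w \<omega>)) UNIV"
    unfolding pser4_def by (rule cauchy4[OF sc sd])
  thus "pser4 (conv4 c d) z \<zeta> w \<omega> = pser4 c z \<zeta> w \<omega> * pser4 d z \<zeta> w \<omega>"
    unfolding pser4_def mon4_conv4 by (rule infsumI)
  have sc': "(\<lambda>k. norm (norm (mon4 c z \<zeta> w \<omega> k))) summable_on UNIV" using sc by simp
  have sd': "(\<lambda>k. norm (norm (mon4 d z \<zeta> w \<omega> k))) summable_on UNIV" using sd by simp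
  have "(\<lambda>k. \<Sum>j\<in>L4 k. norm (mon4 c z \<zeta> w \<omega> j) * norm (mon4 d z \<zeta> w \<omega> (sub4 k j))) summable_on UNIV"
    using cauchy4[OF sc' sd'] has_sum_imp_summable by blast
  thus "(\<lambda>k. norm (mon4 (conv4 c d) z \<zeta> w \<omega> k)) summable_on UNIV"
  proof (rule summable_on_comparison_test)
    fix k
    show "norm (mon4 (conv4 c d) z \<zeta> w \<omega> k) \<le> (\<Sum>j\<in>L4 k. norm (mon4 c z \<zeta> w \<omega> j) * norm (mon4 d z \<zeta> w \<omega> (sub4 k j)))"
      unfolding mon4_conv4 by (rule order.trans[OF norm_sum]) (simp add: norm_mult)
  qed auto
qed

lemma conv4_conv:
  assumes c: "conv_on c r" and d: "conv_on d r"
  shows "conv_on (conv4 c d) r"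
  using conv4_prod(2)[OF c d] c unfolding conv_on_def poly4_def by blast

lemma circle_infinite: "infinite {\<beta>::complex. norm \<beta> = 1}"
proof -
  let ?c = "\<lambda>t::real. (1 + \<i> * of_real t) / (1 - \<i> * of_real t)"
  have nz: "1 - \<i> * complex_of_real t \<noteq> 0" for t
    by (simp add: complex_eq_iff)
  have "inj ?c"
  proof (rule injI)
    fix s t :: real assume "?c s = ?c t"
    hence "(1 + \<i> * of_real s) * (1 - \<i> * of_real t) = (1 + \<i> * of_real t) * (1 - \<i> * complex_of_real s)"
      using nz[of s] nz[of t] by (simp add: divide_eq_eq eq_divide_eq)
    thus "s = t" by (simp add: complex_eq_iff algebra_simps)
  qed
  moreover have "range ?c \<subseteq> {\<beta>. norm \<beta> = 1}"
  proof clarsimp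
    fix t :: real
    have "norm (1 + \<i> * of_real t) = norm (1 - \<i> * of_real t)"
      by (simp add: cmod_def)
    thus "norm ((1 + \<i> * of_real t) / (1 - \<i> * of_real t)) = 1" using nz[of t]
      by (simp add: norm_divide)
  qed
  ultimately show ?thesis
  proof -
    assume i: "inj ?c" and sub: "range ?c \<subseteq> {\<beta>. norm \<beta> = 1}"
    show ?thesis
    proof
      assume "finite {\<beta>::complex. norm \<beta> = 1}"
      hence "finite (range ?c)" using sub finite_subset by blast
      hence "finite (UNIV :: real set)" using finite_imageD i by blast
      thus False using infinite_UNIV_char_0[where 'a=real] by blast
    qed
  qed
qed

lemma ident2:
  fixes K :: "nat \<Rightarrow> nat \<Rightarrow> complex" and \<rho> :: real
  assumes \<rho>: "0 < \<rho>"
    and sm: "(\<lambda>(a,e). norm (K a e) * \<rho>^(a+e)) summable_on UNIV"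
    and van: "\<And>z. norm z < \<rho> \<Longrightarrow> infsum (\<lambda>(a,e). K a e * z^a * cnj z^e) UNIV = 0"
  shows "K a e = 0"
proof -
  define A where "A u N = (\<Sum>i\<le>N. K i (N-i) * u^i * cnj u^(N-i))" for u N
  define \<psi> where "\<psi> u x = (\<lambda>(a,e). K a e * x^(a+e) * u^a * cnj u^e)" for u x :: complex
  have sums: "(\<lambda>N. A u N * x^N) sums infsum (\<psi> u x) UNIV" if u1: "norm u = 1" and xr: "norm x < \<rho>" for u x
  proof -
    have abs: "(\<lambda>k. norm (\<psi> u x k)) summable_on UNIV"
    proof (rule summable_on_comparison_test[OF sm])
      fix k :: "nat \<times> nat" obtain a e where k: "k = (a,e)" by (cases k)
      have "norm x ^ (a+e) \<le> \<rho>^(a+e)" using xr by (intro power_mono) auto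
      hence "norm (K a e) * norm x ^ (a+e) \<le> norm (K a e) * \<rho>^(a+e)" by (rule mult_left_mono) simp
      thus "norm (\<psi> u x k) \<le> (\<lambda>(a,e). norm (K a e) * \<rho>^(a+e)) k"
        using u1 by (simp add: k \<psi>_def norm_mult norm_power)
    qed auto
    hence hs: "(\<psi> u x has_sum infsum (\<psi> u x) UNIV) UNIV"
      using abs_summable_summable has_sum_infsum by blast
    have "((\<lambda>(N,i). \<psi> u x (i, N-i)) has_sum infsum (\<psi> u x) UNIV) (Sigma UNIV (\<lambda>N. {..N}))"
    proof -
      have "((\<lambda>(N,i). \<psi> u x (i, N-i)) has_sum infsum (\<psi> u x) UNIV) (Sigma UNIV (\<lambda>N. {..N}))
          \<longleftrightarrow> (\<psi> u x has_sum infsum (\<psi> u x) UNIV) UNIV"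
        by (rule has_sum_reindex_bij_witness[where i="\<lambda>(a,e). (a+e, a)" and j="\<lambda>(N,i). (i, N-i)"]) auto
      thus ?thesis using hs by simp
    qed
    hence "((\<lambda>N. \<Sum>i\<le>N. \<psi> u x (i, N-i)) has_sum infsum (\<psi> u x) UNIV) UNIV"
      by (rule has_sum_SigmaD) (auto intro!: has_sum_finiteI)
    moreover have "(\<Sum>i\<le>N. \<psi> u x (i, N-i)) = A u N * x^N" for N
      unfolding A_def \<psi>_def sum_distrib_right by (intro sum.cong) (auto simp: mult_ac)
    ultimately show ?thesis using has_sum_imp_sums by simp
  qed
  have real_van: "infsum (\<psi> u (of_real t)) UNIV = 0" if u1: "norm u = 1" and t: "\<bar>t\<bar> < \<rho>" for u t
  proof -
    have "\<psi> u (of_real t) = (\<lambda>(a,e). K a e * (of_real t * u)^a * cnj (of_real t * u)^e)"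
      by (auto simp: \<psi>_def power_mult_distrib power_add mult_ac)
    moreover have "norm (of_real t * u) < \<rho>" using u1 t by (simp add: norm_mult)
    ultimately show ?thesis using van[of "of_real t * u"] by simp
  qed
  have A0: "A u N = 0" if u1: "norm u = 1" for u N
  proof (rule ccontr)
    assume nz: "A u N \<noteq> 0"
    define f where "f x = infsum (\<psi> u x) UNIV" for x
    have f0: "f 0 = 0" using real_van[OF u1, of 0] \<rho> by (simp add: f_def)
    show False
    proof (cases "N = 0")
      case True
      have "(\<lambda>n. A u n * 0^n) sums f 0" using sums[OF u1, of 0] \<rho> by (simp add: f_def)
      hence "A u 0 = f 0" by simp
      thus False using nz True f0 by simp
    next
      case False
      have smx: "\<And>x. norm (x - 0) < \<rho> \<Longrightarrow> (\<lambda>n. A u n * (x - 0)^n) sums f x"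
        using sums[OF u1] by (simp add: f_def)
      obtain s where s: "0 < s" "\<And>z. z \<in> cball 0 s - {0} \<Longrightarrow> f z \<noteq> 0"
        using powser_0_nonzero[OF \<rho> smx f0 nz] False by blast
      define t where "t = min s (\<rho>/2)"
      have t: "0 < t" "t \<le> s" "\<bar>t\<bar> < \<rho>" using s \<rho> by (auto simp: t_def)
      have "f (of_real t) \<noteq> 0" using s(2)[of "of_real t"] t by auto
      moreover have "f (of_real t) = 0" using real_van[OF u1 t(3)] by (simp add: f_def)
      ultimately show False by simp
    qed
  qed
  have Kz: "K i (N-i) = 0" if iN: "i \<le> N" for i N
  proof -
    have roots: "{\<beta>::complex. norm \<beta> = 1} \<subseteq> {\<beta>. (\<Sum>i\<le>N. K i (N-i) * \<beta>^i) = 0}"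
    proof clarify
      fix \<beta> :: complex assume b: "norm \<beta> = 1"
      define u where "u = csqrt \<beta>"
      have u: "norm u = 1" "u^2 = \<beta>" using b by (auto simp: u_def)
      have uc: "u * cnj u = 1"
        using complex_norm_square[of u] u(1) by simp
      have "A u N * u^N = (\<Sum>i\<le>N. K i (N-i) * \<beta>^i)"
        unfolding A_def sum_distrib_right
      proof (intro sum.cong refl)
        fix i assume "i \<in> {..N}"
        hence "u^N = u^i * u^(N-i)" by (simp flip: power_add)
        hence "K i (N-i) * u^i * cnj u^(N-i) * u^N = K i (N-i) * (u^i * u^i) * (u * cnj u)^(N-i)"
          by (simp add: power_mult_distrib mult_ac)
        also have "\<dots> = K i (N-i) * \<beta>^i"
        proof -
          have "\<beta>^i = u^i * u^i" using u(2) by (metis power2_eq_square power_mult_distrib)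
          thus ?thesis using uc by simp
        qed
        finally show "K i (N-i) * u^i * cnj u^(N-i) * u^N = K i (N-i) * \<beta>^i" .
      qed
      thus "(\<Sum>i\<le>N. K i (N-i) * \<beta>^i) = 0" using A0[OF u(1)] by simp
    qed
    hence "\<not> finite {\<beta>. (\<Sum>i\<le>N. K i (N-i) * \<beta>^i) = 0}"
      using circle_infinite finite_subset by blast
    hence "\<forall>i\<le>N. K i (N-i) = 0" using polyfun_finite_roots[of "\<lambda>i. K i (N-i)" N] by auto
    thus ?thesis using iN by blast
  qed
  show ?thesis using Kz[of a "a+e"] by simp
qed

lemma reidx22:
  fixes \<phi> :: "idx \<Rightarrow> 'a::banach"
  shows "(\<lambda>((a,e),(b,d)). \<phi> (a,b,e,d)) summable_on UNIV \<longleftrightarrow> \<phi> summable_on UNIV"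
    and "infsum (\<lambda>((a,e),(b,d)). \<phi> (a,b,e,d)) UNIV = infsum \<phi> UNIV"
  by (rule summable_on_reindex_bij_witness[where j="\<lambda>((a,e),(b,d)). (a,b,e,d)" and i="\<lambda>(a,b,e,d). ((a,e),(b,d))"]; auto)
     (rule infsum_reindex_bij_witness[where j="\<lambda>((a,e),(b,d)). (a,b,e,d)" and i="\<lambda>(a,b,e,d). ((a,e),(b,d))"]; auto)

lemma sigma_outer:
  fixes G :: "('x \<times> 'y) \<Rightarrow> 'a::banach"
  assumes sm: "(\<lambda>k. norm (G k)) summable_on UNIV"
  shows "\<And>x. (\<lambda>y. norm (G (x,y))) summable_on UNIV"
    and "(\<lambda>x. infsum (\<lambda>y. G (x,y)) UNIV) summable_on UNIV"
    and "infsum (\<lambda>x. infsum (\<lambda>y. G (x,y)) UNIV) UNIV = infsum G UNIV"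
proof -
  have abs: "(\<lambda>k. norm (G k)) summable_on Sigma UNIV (\<lambda>_. UNIV)" using sm by simp
  show inner: "\<And>x. (\<lambda>y. norm (G (x,y))) summable_on UNIV"
    using Infinite_Sum.abs_summable_on_Sigma_iff[of G UNIV "\<lambda>_. UNIV"] abs by blast
  have s: "G summable_on Sigma UNIV (\<lambda>_. UNIV)" using abs Infinite_Sum.abs_summable_summable by blast
  have "((\<lambda>x. infsum (\<lambda>y. G (x,y)) UNIV) has_sum infsum G (Sigma UNIV (\<lambda>_. UNIV))) UNIV"
  proof (rule has_sum_SigmaD[OF has_sum_infsum[OF s]])
    fix x :: 'x
    have "(\<lambda>y. G (x,y)) summable_on UNIV" by (rule abs_summable_summable) (rule inner)
    thus "((\<lambda>y. G (x, y)) has_sum infsum (\<lambda>y. G (x,y)) UNIV) UNIV" by (rule has_sum_infsum)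
  qed
  thus "(\<lambda>x. infsum (\<lambda>y. G (x,y)) UNIV) summable_on UNIV"
       "infsum (\<lambda>x. infsum (\<lambda>y. G (x,y)) UNIV) UNIV = infsum G UNIV"
    by (auto simp: has_sum_imp_summable infsumI)
qed

lemma ident4:
  assumes cv: "conv_on c r" and \<delta>: "0 < \<delta>"
    and van: "\<And>z \<zeta>. norm z < \<delta> \<Longrightarrow> norm \<zeta> < \<delta> \<Longrightarrow> pser4 c z \<zeta> (cnj z) (cnj \<zeta>) = 0"
  shows "c a b e d = 0"
proof -
  define \<rho> where "\<rho> = min \<delta> r / 2"
  have r0: "0 < r" using cv conv_on_pos by blast
  have \<rho>: "0 < \<rho>" "\<rho> < \<delta>" "\<rho> < r" using \<delta> r0 by (auto simp: \<rho>_def)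
  define Kz where "Kz \<zeta> a e = infsum (\<lambda>(b,d). c a b e d * \<zeta>^b * cnj \<zeta>^d) UNIV" for \<zeta> a e
  have Kz0: "Kz \<zeta> a e = 0" if z\<rho>: "norm \<zeta> < \<rho>" for \<zeta> a e
  proof (rule ident2[OF \<rho>(1)])
    let ?\<psi> = "mon4 c (of_real \<rho>) (of_real (norm \<zeta>)) (of_real \<rho>) (of_real (norm \<zeta>))"
    have s\<psi>: "(\<lambda>k. norm (?\<psi> k)) summable_on UNIV"
      using cv \<rho> z\<rho> unfolding conv_on_def by auto
    let ?H = "\<lambda>((a,e),(b,d)). norm (?\<psi> (a,b,e,d))"
    have sH: "(\<lambda>k. norm (?H k)) summable_on UNIV"
      using s\<psi> reidx22(1)[of "\<lambda>k. norm (?\<psi> k)"] by (simp add: case_prod_unfold)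
    have Hin: "(\<lambda>y. norm (?H (x,y))) summable_on UNIV" for x using sigma_outer(1)[OF sH] by blast
    have Hout: "(\<lambda>x. infsum (\<lambda>y. ?H (x,y)) UNIV) summable_on UNIV" using sigma_outer(2)[OF sH] by blast
    show "(\<lambda>(a,e). norm (Kz \<zeta> a e) * \<rho>^(a+e)) summable_on UNIV"
    proof (rule summable_on_comparison_test[OF Hout])
      fix x :: "nat\<times>nat" obtain a e where x: "x = (a,e)" by (cases x)
      let ?t = "\<lambda>(b,d). c a b e d * \<zeta>^b * cnj \<zeta>^d"
      have eqH: "(\<lambda>y. ?H (x,y)) = (\<lambda>y. \<rho>^(a+e) * norm (?t y))"
        using \<rho> by (auto simp: x mon4_def norm_mult norm_power power_add mult_ac)
      have "(\<lambda>y. ?H (x,y)) summable_on UNIV" using Hin[of x] by (simp add: x case_prod_unfold)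
      hence h2: "(\<lambda>y. \<rho>^(a+e) * norm (?t y)) summable_on UNIV" unfolding eqH .
      have nz: "\<rho>^(a+e) \<noteq> 0" using \<rho> by simp
      have st: "(\<lambda>y. norm (?t y)) summable_on UNIV"
        using summable_on_cmult_right'[OF nz, THEN iffD1, OF h2] .
      have "norm (Kz \<zeta> a e) \<le> infsum (\<lambda>y. norm (?t y)) UNIV"
        unfolding Kz_def by (rule norm_infsum_bound[OF st])
      hence "norm (Kz \<zeta> a e) * \<rho>^(a+e) \<le> infsum (\<lambda>y. norm (?t y)) UNIV * \<rho>^(a+e)"
        using \<rho> by (intro mult_right_mono) auto
      also have "\<dots> = infsum (\<lambda>y. ?H (x,y)) UNIV"
        unfolding eqH by (simp add: infsum_cmult_right' mult_ac)
      finally show "(\<lambda>(a,e). norm (Kz \<zeta> a e) * \<rho>^(a+e)) x \<le> infsum (\<lambda>y. ?H (x,y)) UNIV"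
        by (simp add: x)
    qed (use \<rho> in auto)
  next
    fix z :: complex assume z: "norm z < \<rho>"
    let ?\<phi> = "mon4 c z \<zeta> (cnj z) (cnj \<zeta>)"
    have s\<phi>: "(\<lambda>k. norm (?\<phi> k)) summable_on UNIV"
      using cv \<rho> z z\<rho> unfolding conv_on_def by auto
    let ?G = "\<lambda>((a,e),(b,d)). ?\<phi> (a,b,e,d)"
    have sG: "(\<lambda>k. norm (?G k)) summable_on UNIV"
      using s\<phi> reidx22(1)[of "\<lambda>k. norm (?\<phi> k)"] by (simp add: case_prod_unfold)
    have "infsum ?\<phi> UNIV = infsum ?G UNIV" using reidx22(2)[of ?\<phi>] by (simp add: case_prod_unfold)
    also have "\<dots> = infsum (\<lambda>x. infsum (\<lambda>y. ?G (x,y)) UNIV) UNIV" using sigma_outer(3)[OF sG] by simp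
    also have "\<dots> = infsum (\<lambda>(a,e). Kz \<zeta> a e * z^a * cnj z^e) UNIV"
    proof (intro infsum_cong)
      fix x :: "nat\<times>nat" obtain a e where x: "x = (a,e)" by (cases x)
      have "(\<lambda>y. ?G (x,y)) = (\<lambda>y. (z^a * cnj z^e) * (\<lambda>(b,d). c a b e d * \<zeta>^b * cnj \<zeta>^d) y)"
        by (auto simp: x mon4_def mult_ac)
      thus "infsum (\<lambda>y. ?G (x,y)) UNIV = (\<lambda>(a,e). Kz \<zeta> a e * z^a * cnj z^e) x"
        by (simp add: x Kz_def infsum_cmult_right' mult_ac)
    qed
    finally show "infsum (\<lambda>(a,e). Kz \<zeta> a e * z^a * cnj z^e) UNIV = 0"
      using van[of z \<zeta>] z z\<rho> \<rho> by (simp add: pser4_def)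
  qed
  show ?thesis
  proof (rule ident2[OF \<rho>(1), where K="\<lambda>b d. c a b e d"])
    let ?\<psi> = "mon4 c (of_real \<rho>) (of_real \<rho>) (of_real \<rho>) (of_real \<rho>)"
    have s\<psi>: "(\<lambda>k. norm (?\<psi> k)) summable_on UNIV"
      using cv \<rho> unfolding conv_on_def by auto
    let ?H = "\<lambda>((a,e),(b,d)). norm (?\<psi> (a,b,e,d))"
    have sH: "(\<lambda>k. norm (?H k)) summable_on UNIV"
      using s\<psi> reidx22(1)[of "\<lambda>k. norm (?\<psi> k)"] by (simp add: case_prod_unfold)
    have Hin: "(\<lambda>y. norm (?H ((a,e),y))) summable_on UNIV" using sigma_outer(1)[OF sH] by blast
    have eqH: "(\<lambda>y. norm (?H ((a,e),y))) = (\<lambda>y. \<rho>^(a+e) * (\<lambda>(b,d). norm (c a b e d) * \<rho>^(b+d)) y)"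
      using \<rho> by (auto simp: mon4_def norm_mult norm_power power_add mult_ac)
    have h: "(\<lambda>y. \<rho>^(a+e) * (\<lambda>(b,d). norm (c a b e d) * \<rho>^(b+d)) y) summable_on UNIV"
      using Hin unfolding eqH .
    have nz: "\<rho>^(a+e) \<noteq> 0" using \<rho> by simp
    show "(\<lambda>(b,d). norm (c a b e d) * \<rho>^(b+d)) summable_on UNIV"
      using summable_on_cmult_right'[OF nz, THEN iffD1, OF h] .
  next
    fix \<zeta> :: complex assume "norm \<zeta> < \<rho>"
    thus "infsum (\<lambda>(b,d). c a b e d * \<zeta>^b * cnj \<zeta>^d) UNIV = 0"
      using Kz0[of \<zeta> a e] by (simp add: Kz_def)
  qed
qed

definition cdiff :: "coeffs4 \<Rightarrow> coeffs4 \<Rightarrow> coeffs4" where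
  "cdiff f g = (\<lambda>a b e d. f a b e d - g a b e d)"

lemma infsum_diff':
  fixes f g :: "'a \<Rightarrow> 'b::{topological_ab_group_add,t2_space}"
  assumes "f summable_on A" "g summable_on A"
  shows "infsum (\<lambda>x. f x - g x) A = infsum f A - infsum g A"
proof -
  have "((\<lambda>x. - g x) has_sum (- infsum g A)) A"
    using has_sum_uminus[where f=g and a="- infsum g A" and A=A] has_sum_infsum[OF assms(2)] by simp
  hence "((\<lambda>x. f x + - g x) has_sum (infsum f A + - infsum g A)) A"
    by (intro has_sum_add has_sum_infsum assms)
  thus ?thesis by (simp add: infsumI)
qed

lemma pser4_diff:
  assumes f: "conv_on f r" and g: "conv_on g r" and p: "poly4 r z \<zeta> w \<omega>"
  shows "pser4 (cdiff f g) z \<zeta> w \<omega> = pser4 f z \<zeta> w \<omega> - pser4 g z \<zeta> w \<omega>"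
proof -
  have sf: "(\<lambda>k. norm (mon4 f z \<zeta> w \<omega> k)) summable_on UNIV" using f p by (simp add: conv_on_def poly4_def)
  have sg: "(\<lambda>k. norm (mon4 g z \<zeta> w \<omega> k)) summable_on UNIV" using g p by (simp add: conv_on_def poly4_def)
  have "mon4 (cdiff f g) z \<zeta> w \<omega> = (\<lambda>k. mon4 f z \<zeta> w \<omega> k - mon4 g z \<zeta> w \<omega> k)"
    by (auto simp: mon4_def cdiff_def algebra_simps)
  thus ?thesis unfolding pser4_def
    using infsum_diff'[OF abs_summable_summable[OF sf] abs_summable_summable[OF sg]] by simp
qed

lemma conv_diff:
  assumes f: "conv_on f r" and g: "conv_on g r"
  shows "conv_on (cdiff f g) r"
  unfolding conv_on_def
proof (intro conjI allI impI)
  show "0 < r" using f conv_on_pos by blast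
  fix z \<zeta> w \<omega> :: complex assume n: "norm z < r \<and> norm \<zeta> < r \<and> norm w < r \<and> norm \<omega> < r"
  have sf: "(\<lambda>k. norm (mon4 f z \<zeta> w \<omega> k)) summable_on UNIV" using f n by (simp add: conv_on_def)
  have sg: "(\<lambda>k. norm (mon4 g z \<zeta> w \<omega> k)) summable_on UNIV" using g n by (simp add: conv_on_def)
  have "(\<lambda>k. norm (mon4 f z \<zeta> w \<omega> k) + norm (mon4 g z \<zeta> w \<omega> k)) summable_on UNIV"
    by (rule summable_on_add[OF sf sg])
  thus "(\<lambda>k. norm (mon4 (cdiff f g) z \<zeta> w \<omega> k)) summable_on UNIV"
  proof (rule summable_on_comparison_test)
    fix k
    have "mon4 (cdiff f g) z \<zeta> w \<omega> k = mon4 f z \<zeta> w \<omega> k - mon4 g z \<zeta> w \<omega> k"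
      by (cases k) (auto simp: mon4_def cdiff_def algebra_simps)
    thus "norm (mon4 (cdiff f g) z \<zeta> w \<omega> k) \<le> norm (mon4 f z \<zeta> w \<omega> k) + norm (mon4 g z \<zeta> w \<omega> k)"
      by (simp add: norm_triangle_ineq4)
  qed auto
qed

definition cstar :: "coeffs4 \<Rightarrow> coeffs4" where
  "cstar f = (\<lambda>a b e d. cnj (f e d a b))"

lemma conv_cstar:
  assumes f: "conv_on f r" shows "conv_on (cstar f) r"
  unfolding conv_on_def
proof (intro conjI allI impI)
  show "0 < r" using f conv_on_pos by blast
  fix z \<zeta> w \<omega> :: complex assume n: "norm z < r \<and> norm \<zeta> < r \<and> norm w < r \<and> norm \<omega> < r"
  have sf: "(\<lambda>k. norm (mon4 f w \<omega> z \<zeta> k)) summable_on UNIV" using f n by (simp add: conv_on_def)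
  have "(\<lambda>k. norm (mon4 (cstar f) z \<zeta> w \<omega> k)) summable_on UNIV \<longleftrightarrow> (\<lambda>k. norm (mon4 f w \<omega> z \<zeta> k)) summable_on UNIV"
    by (rule summable_on_reindex_bij_witness[where j="\<lambda>(a,b,e,d). (e,d,a,b)" and i="\<lambda>(a,b,e,d). (e,d,a,b)"])
       (auto simp: mon4_norm cstar_def mult_ac)
  thus "(\<lambda>k. norm (mon4 (cstar f) z \<zeta> w \<omega> k)) summable_on UNIV" using sf by simp
qed

lemma pser4_cstar:
  "pser4 (cstar f) z \<zeta> (cnj z) (cnj \<zeta>) = cnj (pser4 f z \<zeta> (cnj z) (cnj \<zeta>))"
proof -
  have "cnj (pser4 f z \<zeta> (cnj z) (cnj \<zeta>)) = infsum (\<lambda>k. cnj (mon4 f z \<zeta> (cnj z) (cnj \<zeta>) k)) UNIV"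
    unfolding pser4_def by simp
  also have "\<dots> = pser4 (cstar f) z \<zeta> (cnj z) (cnj \<zeta>)"
    unfolding pser4_def
    by (rule infsum_reindex_bij_witness[where j="\<lambda>(a,b,e,d). (e,d,a,b)" and i="\<lambda>(a,b,e,d). (e,d,a,b)"])
       (auto simp: mon4_def cstar_def mult_ac)
  finally show ?thesis by simp
qed

lemma reality:
  fixes F :: "complex \<Rightarrow> complex \<Rightarrow> real"
  assumes f: "conv_on f r"
    and repr: "\<And>z \<zeta>. norm z < r \<Longrightarrow> norm \<zeta> < r \<Longrightarrow> complex_of_real (F z \<zeta>) = pser4 f z \<zeta> (cnj z) (cnj \<zeta>)"
  shows "f a b e d = cnj (f e d a b)"
proof -
  have r0: "0 < r" using f conv_on_pos by blast
  have "cdiff f (cstar f) a b e d = 0"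
  proof (rule ident4[OF conv_diff[OF f conv_cstar[OF f]] r0])
    fix z \<zeta> :: complex assume n: "norm z < r" "norm \<zeta> < r"
    have p: "poly4 r z \<zeta> (cnj z) (cnj \<zeta>)" using n by (simp add: poly4_def)
    show "pser4 (cdiff f (cstar f)) z \<zeta> (cnj z) (cnj \<zeta>) = 0"
      using pser4_diff[OF f conv_cstar[OF f] p] pser4_cstar[of f z \<zeta>] repr[OF n]
      by (metis Reals_cnj_iff Reals_of_real diff_self)
  qed
  thus ?thesis by (simp add: cdiff_def cstar_def)
qed

definition Dco :: "coeffs4 \<Rightarrow> coeffs4" where
  "Dco c = cdiff (conv4 (d3 (d1 c)) (d4 (d2 c))) (conv4 (d3 (d2 c)) (d4 (d1 c)))"

lemma conv_derivs:
  assumes f: "conv_on f r"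
  shows "conv_on (d3 (d1 f)) r" "conv_on (d4 (d2 f)) r" "conv_on (d3 (d2 f)) r" "conv_on (d4 (d1 f)) r"
  using f by (simp_all add: conv_sw3_d conv_sw4_d conv_sw2_d conv_d1)

lemma pser4_Dco:
  assumes f: "conv_on f r" and p: "poly4 r z \<zeta> w \<omega>"
  shows "pser4 (Dco f) z \<zeta> w \<omega> = pser4 (d3 (d1 f)) z \<zeta> w \<omega> * pser4 (d4 (d2 f)) z \<zeta> w \<omega>
      - pser4 (d3 (d2 f)) z \<zeta> w \<omega> * pser4 (d4 (d1 f)) z \<zeta> w \<omega>"
proof -
  note cd = conv_derivs[OF f]
  have "pser4 (Dco f) z \<zeta> w \<omega> = pser4 (conv4 (d3 (d1 f)) (d4 (d2 f))) z \<zeta> w \<omega> - pser4 (conv4 (d3 (d2 f)) (d4 (d1 f))) z \<zeta> w \<omega>"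
    unfolding Dco_def by (rule pser4_diff[OF conv4_conv[OF cd(1,2)] conv4_conv[OF cd(3,4)] p])
  thus ?thesis by (simp add: conv4_prod(1)[OF cd(1,2) p] conv4_prod(1)[OF cd(3,4) p])
qed

lemma Dco_zero:
  assumes f: "conv_on f r"
    and levi: "\<exists>\<delta>>0. \<forall>z \<zeta>. norm z < \<delta> \<and> norm \<zeta> < \<delta> \<longrightarrow>
           d13 (pser4 f) z \<zeta> * d24 (pser4 f) z \<zeta> - d23 (pser4 f) z \<zeta> * d14 (pser4 f) z \<zeta> = 0"
  shows "Dco f a b e d = 0"
proof -
  obtain \<delta> where \<delta>: "\<delta> > 0" and lv: "\<And>z \<zeta>. norm z < \<delta> \<Longrightarrow> norm \<zeta> < \<delta> \<Longrightarrow>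
           d13 (pser4 f) z \<zeta> * d24 (pser4 f) z \<zeta> - d23 (pser4 f) z \<zeta> * d14 (pser4 f) z \<zeta> = 0"
    using levi by blast
  have r0: "0 < r" using f conv_on_pos by blast
  have cD: "conv_on (Dco f) r" unfolding Dco_def using conv_derivs[OF f]
    by (intro conv_diff conv4_conv) auto
  show ?thesis
  proof (rule ident4[OF cD, of "min \<delta> r"])
    show "0 < min \<delta> r" using \<delta> r0 by simp
    fix z \<zeta> :: complex assume n: "norm z < min \<delta> r" "norm \<zeta> < min \<delta> r"
    have p: "poly4 r z \<zeta> (cnj z) (cnj \<zeta>)" using n by (simp add: poly4_def)
    show "pser4 (Dco f) z \<zeta> (cnj z) (cnj \<zeta>) = 0"
      using pser4_Dco[OF f p] lv[of z \<zeta>] n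
        d13_eval[OF f, of z \<zeta>] d24_eval[OF f, of z \<zeta>] d23_eval[OF f, of z \<zeta>] d14_eval[OF f, of z \<zeta>]
      by simp
  qed
qed

definition Mc :: coeffs4 where
  "Mc a b e d = (if a = 1 \<and> e = 1 \<and> d = b then 1 else if a = 2 \<and> e = 0 \<and> d = Suc b then 1/2
     else if a = 0 \<and> e = 2 \<and> b = Suc d then 1/2 else 0)"

definition m4 :: "complex \<Rightarrow> complex \<Rightarrow> complex \<Rightarrow> complex \<Rightarrow> complex" where
  "m4 z \<zeta> w \<omega> = (z*w + z^2*\<omega>/2 + w^2*\<zeta>/2) / (1 - \<zeta>*\<omega>)"

lemma three_lines:
  fixes \<phi> :: "idx \<Rightarrow> 'a::real_normed_vector"
  assumes zero: "\<And>a b e d. \<phi> (a,b,e,d) \<noteq> 0 \<Longrightarrow> (a = 1 \<and> e = 1 \<and> d = b) \<or> (a = 2 \<and> e = 0 \<and> d = Suc b) \<or> (a = 0 \<and> e = 2 \<and> b = Suc d)"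
    and h1: "((\<lambda>k. \<phi> (1,k,1,k)) has_sum s1) UNIV"
    and h2: "((\<lambda>k. \<phi> (2,k,0,Suc k)) has_sum s2) UNIV"
    and h3: "((\<lambda>k. \<phi> (0,Suc k,2,k)) has_sum s3) UNIV"
  shows "(\<phi> has_sum (s1+s2+s3)) UNIV"
proof -
  let ?g1 = "\<lambda>k::nat. (1::nat,k,1::nat,k)" and ?g2 = "\<lambda>k::nat. (2::nat,k,0::nat,Suc k)"
    and ?g3 = "\<lambda>k::nat. (0::nat,Suc k,2::nat,k)"
  have i1: "inj ?g1" and i2: "inj ?g2" and i3: "inj ?g3" by (auto simp: inj_def)
  have a1: "(\<phi> has_sum s1) (range ?g1)" using has_sum_reindex[OF i1, of \<phi>] h1 by (simp add: o_def)
  have a2: "(\<phi> has_sum s2) (range ?g2)" using has_sum_reindex[OF i2, of \<phi>] h2 by (simp add: o_def)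
  have a3: "(\<phi> has_sum s3) (range ?g3)" using has_sum_reindex[OF i3, of \<phi>] h3 by (simp add: o_def)
  have "(\<phi> has_sum (s1+s2)) (range ?g1 \<union> range ?g2)"
    by (rule has_sum_Un_disjoint[OF a1 a2]) auto
  hence "(\<phi> has_sum (s1+s2+s3)) (range ?g1 \<union> range ?g2 \<union> range ?g3)"
    by (rule has_sum_Un_disjoint[OF _ a3]) auto
  moreover have "\<phi> x = 0" if "x \<notin> range ?g1 \<union> range ?g2 \<union> range ?g3" for x
  proof (rule ccontr)
    assume "\<phi> x \<noteq> 0"
    moreover obtain a b e d where x: "x = (a,b,e,d)" by (cases x) auto
    ultimately have "(a = 1 \<and> e = 1 \<and> d = b) \<or> (a = 2 \<and> e = 0 \<and> d = Suc b) \<or> (a = 0 \<and> e = 2 \<and> b = Suc d)"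
      using zero by simp
    thus False using that x by auto
  qed
  ultimately show ?thesis
    by (subst has_sum_cong_neutral[where T="range ?g1 \<union> range ?g2 \<union> range ?g3" and g=\<phi>]) auto
qed

lemma geom_has_sum:
  fixes x :: "'a::{real_normed_field,banach}"
  assumes "norm x < 1"
  shows "((\<lambda>k. x^k) has_sum (1 / (1 - x))) UNIV"
  by (rule norm_summable_imp_has_sum) (use assms in \<open>auto simp: norm_power summable_geometric geometric_sums\<close>)

lemma Mc_has_sum:
  assumes n: "norm \<zeta> * norm \<omega> < 1"
  shows "(mon4 Mc z \<zeta> w \<omega> has_sum m4 z \<zeta> w \<omega>) UNIV"
    and "(\<lambda>k. norm (mon4 Mc z \<zeta> w \<omega> k)) summable_on UNIV"
proof -
  have g: "((\<lambda>k. (\<zeta>*\<omega>)^k) has_sum (1 / (1 - \<zeta>*\<omega>))) UNIV"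
    by (rule geom_has_sum) (use n in \<open>simp add: norm_mult\<close>)
  have nz: "1 - \<zeta>*\<omega> \<noteq> 0"
  proof
    assume "1 - \<zeta>*\<omega> = 0" hence "\<zeta>*\<omega> = 1" by simp
    hence "norm \<zeta> * norm \<omega> = 1" by (metis norm_mult norm_one)
    thus False using n by simp
  qed
  have "(mon4 Mc z \<zeta> w \<omega> has_sum ((z*w) * (1 / (1 - \<zeta>*\<omega>)) + (z^2*\<omega>/2) * (1 / (1 - \<zeta>*\<omega>))
        + (w^2*\<zeta>/2) * (1 / (1 - \<zeta>*\<omega>)))) UNIV"
  proof (rule three_lines)
    show "((\<lambda>k. mon4 Mc z \<zeta> w \<omega> (1,k,1,k)) has_sum ((z*w) * (1 / (1 - \<zeta>*\<omega>)))) UNIV"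
      using has_sum_cmult_right[OF g, of "z*w"] by (simp add: mon4_def Mc_def power_mult_distrib mult_ac)
    show "((\<lambda>k. mon4 Mc z \<zeta> w \<omega> (2,k,0,Suc k)) has_sum ((z^2*\<omega>/2) * (1 / (1 - \<zeta>*\<omega>)))) UNIV"
      using has_sum_cmult_right[OF g, of "z^2*\<omega>/2"] by (simp add: mon4_def Mc_def power_mult_distrib mult_ac)
    show "((\<lambda>k. mon4 Mc z \<zeta> w \<omega> (0,Suc k,2,k)) has_sum ((w^2*\<zeta>/2) * (1 / (1 - \<zeta>*\<omega>)))) UNIV"
      using has_sum_cmult_right[OF g, of "w^2*\<zeta>/2"] by (simp add: mon4_def Mc_def power_mult_distrib mult_ac)
  qed (auto simp: mon4_def Mc_def split: if_splits)
  moreover have "(z*w) * (1 / (1 - \<zeta>*\<omega>)) + (z^2*\<omega>/2) * (1 / (1 - \<zeta>*\<omega>))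
        + (w^2*\<zeta>/2) * (1 / (1 - \<zeta>*\<omega>)) = m4 z \<zeta> w \<omega>"
    by (simp add: m4_def add_divide_distrib)
  ultimately show "(mon4 Mc z \<zeta> w \<omega> has_sum m4 z \<zeta> w \<omega>) UNIV" by simp
  have gr: "((\<lambda>k. (norm \<zeta> * norm \<omega>)^k) has_sum (1 / (1 - norm \<zeta> * norm \<omega>))) UNIV"
    by (rule geom_has_sum) (use n in simp)
  have "((\<lambda>k. norm (mon4 Mc z \<zeta> w \<omega> k)) has_sum ((norm z*norm w) * (1 / (1 - norm \<zeta> * norm \<omega>)) + (norm z^2*norm \<omega>/2) * (1 / (1 - norm \<zeta> * norm \<omega>))
        + (norm w^2*norm \<zeta>/2) * (1 / (1 - norm \<zeta> * norm \<omega>)))) UNIV"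
  proof (rule three_lines)
    show "((\<lambda>k. norm (mon4 Mc z \<zeta> w \<omega> (1,k,1,k))) has_sum ((norm z*norm w) * (1 / (1 - norm \<zeta> * norm \<omega>)))) UNIV"
      using has_sum_cmult_right[OF gr, of "norm z*norm w"] by (simp add: mon4_norm Mc_def power_mult_distrib mult_ac)
    show "((\<lambda>k. norm (mon4 Mc z \<zeta> w \<omega> (2,k,0,Suc k))) has_sum ((norm z^2*norm \<omega>/2) * (1 / (1 - norm \<zeta> * norm \<omega>)))) UNIV"
      using has_sum_cmult_right[OF gr, of "norm z^2*norm \<omega>/2"] by (simp add: mon4_norm Mc_def power_mult_distrib mult_ac)
    show "((\<lambda>k. norm (mon4 Mc z \<zeta> w \<omega> (0,Suc k,2,k))) has_sum ((norm w^2*norm \<zeta>/2) * (1 / (1 - norm \<zeta> * norm \<omega>)))) UNIV"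
      using has_sum_cmult_right[OF gr, of "norm w^2*norm \<zeta>/2"] by (simp add: mon4_norm Mc_def power_mult_distrib mult_ac)
  qed (auto simp: mon4_def Mc_def split: if_splits)
  thus "(\<lambda>k. norm (mon4 Mc z \<zeta> w \<omega> k)) summable_on UNIV" using has_sum_imp_summable by blast
qed

lemma poly4_lt1: "poly4 1 z \<zeta> w \<omega> \<Longrightarrow> norm \<zeta> * norm \<omega> < 1"
  unfolding poly4_def by (metis mult_strict_mono' norm_ge_zero mult_1)

lemma conv_Mc: "conv_on Mc 1"
  unfolding conv_on_def using Mc_has_sum(2) poly4_lt1 by (auto simp: poly4_def)

lemma pser_Mc: "poly4 1 z \<zeta> w \<omega> \<Longrightarrow> pser4 Mc z \<zeta> w \<omega> = m4 z \<zeta> w \<omega>"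
  unfolding pser4_def using Mc_has_sum(1)[OF poly4_lt1] infsumI by blast

lemma mfun_m4: "mfun z \<zeta> = m4 z \<zeta> (cnj z) (cnj \<zeta>)"
  by (simp add: mfun_def m4_def)

lemma nz1: "poly4 1 z \<zeta> w \<omega> \<Longrightarrow> 1 - \<zeta>*\<omega> \<noteq> 0"
proof
  assume p: "poly4 1 z \<zeta> w \<omega>" and "1 - \<zeta>*\<omega> = 0"
  hence "\<zeta>*\<omega> = 1" by simp
  hence "norm \<zeta> * norm \<omega> = 1" by (metis norm_mult norm_one)
  thus False using poly4_lt1[OF p] by simp
qed

definition mz2 :: "complex \<Rightarrow> complex \<Rightarrow> complex \<Rightarrow> complex \<Rightarrow> complex" where
  "mz2 z \<zeta> w \<omega> = (w^2/2*(1-\<zeta>*\<omega>) + (z*w + z^2*\<omega>/2 + w^2*\<zeta>/2)*\<omega>)/(1-\<zeta>*\<omega>)^2"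

lemma D1: assumes "poly4 1 z \<zeta> w \<omega>"
  shows "((\<lambda>t. m4 t \<zeta> w \<omega>) has_field_derivative (w + z*\<omega>)/(1-\<zeta>*\<omega>)) (at z)"
proof -
  have nz: "1 - \<zeta>*\<omega> \<noteq> 0" using nz1[OF assms] .
  show ?thesis unfolding m4_def
    by (rule derivative_eq_intros refl | use nz in simp)+
qed


lemma DERIV_div2:
  fixes f g :: "complex \<Rightarrow> complex"
  assumes "(f has_field_derivative D) (at x)" "(g has_field_derivative E) (at x)" "g x \<noteq> 0"
  shows "((\<lambda>x. f x / g x) has_field_derivative (D * g x - f x * E) / (g x)^2) (at x)"
  using DERIV_divide[OF assms] by (simp add: power2_eq_square)

lemma nzs: assumes "poly4 1 z \<zeta> w \<omega>"
  shows "1 - \<zeta>*\<omega> \<noteq> 0" "\<zeta>*\<omega> \<noteq> 1" "\<omega>*\<zeta> \<noteq> 1"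
  using nz1[OF assms] by (auto simp: mult.commute)

lemma D_3a: assumes p: "poly4 1 z \<zeta> w \<omega>"
  shows "((\<lambda>t. (t + z*\<omega>)/(1-\<zeta>*\<omega>)) has_field_derivative 1/(1-\<zeta>*\<omega>)) (at w)"
proof -
  note nz = nzs[OF p]
  have "((\<lambda>t. (t + z*\<omega>)/(1-\<zeta>*\<omega>)) has_field_derivative (1 * (1-\<zeta>*\<omega>) - (w + z*\<omega>) * 0)/(1-\<zeta>*\<omega>)^2) (at w)"
    by (rule DERIV_div2) (auto intro!: derivative_eq_intros simp: nz)
  thus ?thesis by (rule DERIV_cong) (use nz in \<open>simp add: field_simps; algebra\<close>)
qed

lemma D_2: assumes p: "poly4 1 z \<zeta> w \<omega>"
  shows "((\<lambda>t. m4 z t w \<omega>) has_field_derivative mz2 z \<zeta> w \<omega>) (at \<zeta>)"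
proof -
  note nz = nzs[OF p]
  have "((\<lambda>t. (z*w + z^2*\<omega>/2 + w^2*t/2) / (1 - t*\<omega>)) has_field_derivative
     ((w^2/2) * (1-\<zeta>*\<omega>) - (z*w + z^2*\<omega>/2 + w^2*\<zeta>/2) * (-\<omega>))/(1-\<zeta>*\<omega>)^2) (at \<zeta>)"
    by (rule DERIV_div2) (auto intro!: derivative_eq_intros simp: nz)
  thus ?thesis unfolding m4_def mz2_def by (rule DERIV_cong) (use nz in \<open>simp add: field_simps power2_eq_square\<close>)
qed

lemma D_4b: assumes p: "poly4 1 z \<zeta> w \<omega>"
  shows "((\<lambda>t. mz2 z \<zeta> w t) has_field_derivative
     (2*(z*w + z^2*\<omega>/2 + w^2*\<zeta>/2) - z*w*(1-\<zeta>*\<omega>))/(1-\<zeta>*\<omega>)^3) (at \<omega>)"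
proof -
  note nz = nzs[OF p]
  have "((\<lambda>t. (w^2/2*(1-\<zeta>*t) + (z*w + z^2*t/2 + w^2*\<zeta>/2)*t) / (1-\<zeta>*t)^2) has_field_derivative
     ((z*w + z^2*\<omega>) * (1-\<zeta>*\<omega>)^2 - (w^2/2*(1-\<zeta>*\<omega>) + (z*w + z^2*\<omega>/2 + w^2*\<zeta>/2)*\<omega>) * (- 2*\<zeta>*(1-\<zeta>*\<omega>)))/((1-\<zeta>*\<omega>)^2)^2) (at \<omega>)"
    by (rule DERIV_div2) (auto intro!: derivative_eq_intros simp: nz algebra_simps)
  thus ?thesis unfolding mz2_def by (rule DERIV_cong) (use nz in \<open>simp add: field_simps; algebra\<close>)
qed

lemma D_3b: assumes p: "poly4 1 z \<zeta> w \<omega>"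
  shows "((\<lambda>t. mz2 z \<zeta> t \<omega>) has_field_derivative (w + z*\<omega>)/(1-\<zeta>*\<omega>)^2) (at w)"
proof -
  note nz = nzs[OF p]
  have "((\<lambda>t. (t^2/2*(1-\<zeta>*\<omega>) + (z*t + z^2*\<omega>/2 + t^2*\<zeta>/2)*\<omega>) / (1-\<zeta>*\<omega>)^2) has_field_derivative
     ((w*(1-\<zeta>*\<omega>) + (z + w*\<zeta>)*\<omega>) * (1-\<zeta>*\<omega>)^2 - (w^2/2*(1-\<zeta>*\<omega>) + (z*w + z^2*\<omega>/2 + w^2*\<zeta>/2)*\<omega>) * 0)/((1-\<zeta>*\<omega>)^2)^2) (at w)"
    by (rule DERIV_div2) (auto intro!: derivative_eq_intros simp: nz algebra_simps divide_simps)
  thus ?thesis unfolding mz2_def by (rule DERIV_cong) (use nz in \<open>simp add: field_simps; algebra\<close>)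
qed

lemma D_4a: assumes p: "poly4 1 z \<zeta> w \<omega>"
  shows "((\<lambda>t. (w + z*t)/(1-\<zeta>*t)) has_field_derivative (z + w*\<zeta>)/(1-\<zeta>*\<omega>)^2) (at \<omega>)"
proof -
  note nz = nzs[OF p]
  have "((\<lambda>t. (w + z*t)/(1-\<zeta>*t)) has_field_derivative (z * (1-\<zeta>*\<omega>) - (w + z*\<omega>) * (-\<zeta>))/(1-\<zeta>*\<omega>)^2) (at \<omega>)"
    by (rule DERIV_div2) (auto intro!: derivative_eq_intros simp: nz)
  thus ?thesis by (rule DERIV_cong) (use nz in \<open>simp add: field_simps power2_eq_square\<close>)
qed

lemma conv_Dco: "conv_on f r \<Longrightarrow> conv_on (Dco f) r"
  unfolding Dco_def using conv_derivs by (intro conv_diff conv4_conv) auto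

lemma e1: "poly4 1 z \<zeta> w \<omega> \<Longrightarrow> pser4 (d1 Mc) z \<zeta> w \<omega> = (w + z*\<omega>)/(1-\<zeta>*\<omega>)"
  by (rule DU1[where h=m4 and h'="\<lambda>z \<zeta> w \<omega>. (w + z*\<omega>)/(1-\<zeta>*\<omega>)", OF conv_Mc pser_Mc D1])
lemma e2: "poly4 1 z \<zeta> w \<omega> \<Longrightarrow> pser4 (d2 Mc) z \<zeta> w \<omega> = mz2 z \<zeta> w \<omega>"
  by (rule DU2[where h=m4 and h'=mz2, OF conv_Mc pser_Mc D_2])
lemma e13: "poly4 1 z \<zeta> w \<omega> \<Longrightarrow> pser4 (d3 (d1 Mc)) z \<zeta> w \<omega> = 1/(1-\<zeta>*\<omega>)"
  by (rule DU3[where h="\<lambda>z \<zeta> w \<omega>. (w + z*\<omega>)/(1-\<zeta>*\<omega>)" and h'="\<lambda>z \<zeta> w \<omega>. 1/(1-\<zeta>*\<omega>)",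
        OF conv_d1[OF conv_Mc] e1 D_3a])
lemma e24: "poly4 1 z \<zeta> w \<omega> \<Longrightarrow> pser4 (d4 (d2 Mc)) z \<zeta> w \<omega> =
    (2*(z*w + z^2*\<omega>/2 + w^2*\<zeta>/2) - z*w*(1-\<zeta>*\<omega>))/(1-\<zeta>*\<omega>)^3"
  by (rule DU4[where h=mz2 and h'="\<lambda>z \<zeta> w \<omega>. (2*(z*w + z^2*\<omega>/2 + w^2*\<zeta>/2) - z*w*(1-\<zeta>*\<omega>))/(1-\<zeta>*\<omega>)^3",
        OF conv_sw2_d[OF conv_Mc] e2 D_4b])
lemma e23: "poly4 1 z \<zeta> w \<omega> \<Longrightarrow> pser4 (d3 (d2 Mc)) z \<zeta> w \<omega> = (w + z*\<omega>)/(1-\<zeta>*\<omega>)^2"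
  by (rule DU3[where h=mz2 and h'="\<lambda>z \<zeta> w \<omega>. (w + z*\<omega>)/(1-\<zeta>*\<omega>)^2",
        OF conv_sw2_d[OF conv_Mc] e2 D_3b])
lemma e14: "poly4 1 z \<zeta> w \<omega> \<Longrightarrow> pser4 (d4 (d1 Mc)) z \<zeta> w \<omega> = (z + w*\<zeta>)/(1-\<zeta>*\<omega>)^2"
  by (rule DU4[where h="\<lambda>z \<zeta> w \<omega>. (w + z*\<omega>)/(1-\<zeta>*\<omega>)" and h'="\<lambda>z \<zeta> w \<omega>. (z + w*\<zeta>)/(1-\<zeta>*\<omega>)^2",
        OF conv_d1[OF conv_Mc] e1 D_4a])

lemma Dco_Mc: "Dco Mc a b e d = 0"
proof (rule ident4[OF conv_Dco[OF conv_Mc], of 1])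
  fix z \<zeta> :: complex assume n: "norm z < 1" "norm \<zeta> < 1"
  have p: "poly4 1 z \<zeta> (cnj z) (cnj \<zeta>)" using n by (simp add: poly4_def)
  note nz = nzs[OF p]
  show "pser4 (Dco Mc) z \<zeta> (cnj z) (cnj \<zeta>) = 0"
    unfolding pser4_Dco[OF conv_Mc p] e13[OF p] e24[OF p] e23[OF p] e14[OF p]
    using nz by (simp add: field_simps; algebra)
qed simp

definition DT :: "coeffs4 \<Rightarrow> nat \<Rightarrow> nat \<Rightarrow> nat \<Rightarrow> nat \<Rightarrow> idx \<Rightarrow> complex" where
  "DT c a b e k = (\<lambda>(a1,b1,e1,k1). d3 (d1 c) a1 b1 e1 k1 * d4 (d2 c) (a-a1) (b-b1) (e-e1) (k-k1)
      - d3 (d2 c) a1 b1 e1 k1 * d4 (d1 c) (a-a1) (b-b1) (e-e1) (k-k1))"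

lemma Dco_sum: "Dco c a b e k = (\<Sum>x\<in>{..a}\<times>{..b}\<times>{..e}\<times>{..k}. DT c a b e k x)"
  unfolding Dco_def cdiff_def conv4_def DT_def
  by (simp add: sum_subtractf[symmetric] case_prod_unfold)

lemma sum_single:
  assumes "finite S" "x0 \<in> S" "\<And>x. x \<in> S \<Longrightarrow> x \<noteq> x0 \<Longrightarrow> g x = 0"
  shows "sum g S = g x0"
proof -
  have "sum g S = g x0 + sum g (S - {x0})" using assms(1,2) by (rule sum.remove)
  also have "sum g (S - {x0}) = 0" using assms(3) by (intro sum.neutral) auto
  finally show ?thesis by simp
qed

lemma Dco_single:
  assumes "\<And>a1 b1 e1 k1. a1 \<le> a \<Longrightarrow> b1 \<le> b \<Longrightarrow> e1 \<le> e \<Longrightarrow> k1 \<le> k \<Longrightarrow> (a1,b1,e1,k1) \<noteq> (0,0,0,0)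
      \<Longrightarrow> DT c a b e k (a1,b1,e1,k1) = 0"
  shows "Dco c a b e k = DT c a b e k (0,0,0,0)"
  unfolding Dco_sum
proof (rule sum_single)
  fix x assume x: "x \<in> {..a}\<times>{..b}\<times>{..e}\<times>{..k}" "x \<noteq> (0,0,0,0)"
  then obtain a1 b1 e1 k1 where "x = (a1,b1,e1,k1)" "a1 \<le> a" "b1 \<le> b" "e1 \<le> e" "k1 \<le> k" by auto
  thus "DT c a b e k x = 0" using assms x(2) by blast
qed auto

lemma d_simps:
  "d3 (d1 c) a b e k = of_nat (Suc e) * of_nat (Suc a) * c (Suc a) b (Suc e) k"
  "d4 (d2 c) a b e k = of_nat (Suc k) * of_nat (Suc b) * c a (Suc b) e (Suc k)"
  "d3 (d2 c) a b e k = of_nat (Suc e) * of_nat (Suc b) * c a (Suc b) (Suc e) k"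
  "d4 (d1 c) a b e k = of_nat (Suc k) * of_nat (Suc a) * c (Suc a) b e (Suc k)"
  by (simp_all add: d1_def d2_def d3_def d4_def del: of_nat_Suc)

lemma stepA:
  fixes f :: coeffs4
  assumes D: "\<And>a b e k. Dco f a b e k = 0"
    and pn: "\<And>a b e. e \<le> 2 \<Longrightarrow> f a b e 0 = (if (a,b,e) = (1,0,1) then 1 else if (a,b,e) = (0,1,2) then 1/2 else 0)"
    and rl: "\<And>a b e d. f a b e d = cnj (f e d a b)"
  shows "\<forall>b. f 0 b 0 d = 0 \<and> f 1 b 0 d = 0 \<and> f 0 b 1 d = 0"
proof (induction d rule: less_induct)
  case (less d)
  show ?case
  proof (cases d)
    case 0 then show ?thesis using pn by simp
  next
    case (Suc d')
    have IH1: "\<And>j b. j \<le> d' \<Longrightarrow> f 0 b 0 j = 0" and IH2: "\<And>j b. j \<le> d' \<Longrightarrow> f 1 b 0 j = 0"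
      and IH3: "\<And>j b. j \<le> d' \<Longrightarrow> f 0 b 1 j = 0"
      using less.IH Suc by auto
    have P: "f 0 b 0 (Suc d') = 0" for b
    proof (cases b)
      case 0
      have "f 0 0 0 (Suc d') = cnj (f 0 (Suc d') 0 0)" by (rule rl)
      thus ?thesis using pn[of 0 0 "Suc d'"] 0 by simp
    next
      case (Suc b')
      have "Dco f 0 b' 0 d' = DT f 0 b' 0 d' (0,0,0,0)"
      proof (rule Dco_single)
        fix a1 b1 e1 k1 :: nat assume r: "a1 \<le> 0" "b1 \<le> b'" "e1 \<le> 0" "k1 \<le> d'" "(a1,b1,e1,k1) \<noteq> (0,0,0,0)"
        show "DT f 0 b' 0 d' (a1,b1,e1,k1) = 0"
        proof (cases k1)
          case 0
          then show ?thesis using r by (simp add: DT_def d_simps pn del: of_nat_Suc)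
        next
          case (Suc k1')
          have "Suc (d' - k1) \<le> d'" using r Suc by simp
          then show ?thesis using r IH1 IH3 by (simp add: DT_def d_simps del: of_nat_Suc)
        qed
      qed
      hence "of_nat (Suc d') * of_nat (Suc b') * f 0 (Suc b') 0 (Suc d') = 0"
        using D[of 0 b' 0 d'] by (simp add: DT_def d_simps pn del: of_nat_Suc)
      thus ?thesis using Suc by (simp del: of_nat_Suc)
    qed
    have P': "\<And>j b. j \<le> Suc d' \<Longrightarrow> f 0 b 0 j = 0"
      using IH1 P by (metis le_Suc_eq)
    have Q: "f 1 b 0 (Suc d') = 0" for b
    proof (cases b)
      case 0
      have "f 1 0 0 (Suc d') = cnj (f 0 (Suc d') 1 0)" by (rule rl)
      thus ?thesis using pn[of 1 0 "Suc d'"] 0 by simp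
    next
      case (Suc b')
      have "Dco f 1 b' 0 d' = DT f 1 b' 0 d' (0,0,0,0)"
      proof (rule Dco_single)
        fix a1 b1 e1 k1 :: nat assume r: "a1 \<le> 1" "b1 \<le> b'" "e1 \<le> 0" "k1 \<le> d'" "(a1,b1,e1,k1) \<noteq> (0,0,0,0)"
        have a1: "a1 = 0 \<or> a1 = 1" using r by auto
        show "DT f 1 b' 0 d' (a1,b1,e1,k1) = 0"
        proof (cases k1)
          case 0
          then show ?thesis using r a1 P' by (auto simp add: DT_def d_simps pn simp del: of_nat_Suc)
        next
          case (Suc k1')
          have "Suc (d' - k1) \<le> d'" using r Suc by simp
          then show ?thesis using r a1 IH2 IH3 P' by (auto simp add: DT_def d_simps simp del: of_nat_Suc)
        qed
      qed
      hence "of_nat (Suc d') * of_nat (Suc b') * f 1 (Suc b') 0 (Suc d') = 0"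
        using D[of 1 b' 0 d'] by (simp add: DT_def d_simps pn del: of_nat_Suc)
      thus ?thesis using Suc by (simp del: of_nat_Suc)
    qed
    have Q': "\<And>j b. j \<le> Suc d' \<Longrightarrow> f 1 b 0 j = 0"
      using IH2 Q by (metis le_Suc_eq)
    have R: "f 0 b 1 (Suc d') = 0" for b
    proof (cases b)
      case 0
      have "f 0 0 1 (Suc d') = cnj (f 1 (Suc d') 0 0)" by (rule rl)
      thus ?thesis using pn[of 0 1 "Suc d'"] 0 by simp
    next
      case (Suc b')
      have "Dco f 0 b' 1 d' = DT f 0 b' 1 d' (0,0,0,0)"
      proof (rule Dco_single)
        fix a1 b1 e1 k1 :: nat assume r: "a1 \<le> 0" "b1 \<le> b'" "e1 \<le> 1" "k1 \<le> d'" "(a1,b1,e1,k1) \<noteq> (0,0,0,0)"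
        have e1: "e1 = 0 \<or> e1 = 1" using r by auto
        show "DT f 0 b' 1 d' (a1,b1,e1,k1) = 0"
        proof (cases k1)
          case 0
          then show ?thesis using r e1 P' Q' by (auto simp add: DT_def d_simps pn simp del: of_nat_Suc)
        next
          case (Suc k1')
          have "Suc (d' - k1) \<le> d'" using r Suc by simp
          then show ?thesis using r e1 IH3 P' Q' by (auto simp add: DT_def d_simps simp del: of_nat_Suc)
        qed
      qed
      hence "of_nat (Suc d') * of_nat (Suc b') * f 0 (Suc b') 1 (Suc d') = 0"
        using D[of 0 b' 1 d'] by (simp add: DT_def d_simps pn del: of_nat_Suc)
      thus ?thesis using Suc by (simp del: of_nat_Suc)
    qed
    show ?thesis using P Q R \<open>d = Suc d'\<close> by simp
  qed
qed

lemma Dco_diff_single: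
  assumes "\<And>a1 b1 e1 k1. a1 \<le> a \<Longrightarrow> b1 \<le> b \<Longrightarrow> e1 \<le> e \<Longrightarrow> k1 \<le> k \<Longrightarrow> (a1,b1,e1,k1) \<noteq> (0,0,0,0)
      \<Longrightarrow> DT f a b e k (a1,b1,e1,k1) = DT g a b e k (a1,b1,e1,k1)"
  shows "Dco f a b e k - Dco g a b e k = DT f a b e k (0,0,0,0) - DT g a b e k (0,0,0,0)"
proof -
  have "Dco f a b e k - Dco g a b e k = (\<Sum>x\<in>{..a}\<times>{..b}\<times>{..e}\<times>{..k}. DT f a b e k x - DT g a b e k x)"
    unfolding Dco_sum by (simp add: sum_subtractf)
  also have "\<dots> = DT f a b e k (0,0,0,0) - DT g a b e k (0,0,0,0)"
  proof (rule sum_single)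
    fix x assume x: "x \<in> {..a}\<times>{..b}\<times>{..e}\<times>{..k}" "x \<noteq> (0,0,0,0)"
    then obtain a1 b1 e1 k1 where "x = (a1,b1,e1,k1)" "a1 \<le> a" "b1 \<le> b" "e1 \<le> e" "k1 \<le> k" by auto
    thus "DT f a b e k x - DT g a b e k x = 0" using assms x(2) by simp
  qed auto
  finally show ?thesis .
qed

lemma Mc_simps:
  "Mc 0 b 0 j = 0" "Mc 1 b 0 j = 0" "Mc 0 b 1 j = 0" "Mc 1 0 1 0 = 1" "Mc 0 1 1 0 = 0"
  "Mc (Suc 0) b 0 j = 0" "Mc 0 b (Suc 0) j = 0" "Mc (Suc 0) 0 (Suc 0) 0 = 1" "Mc 0 (Suc 0) (Suc 0) 0 = 0"
  by (simp_all add: Mc_def)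

lemma d_simps1:
  "d3 (d1 c) a b e k = of_nat (e+1) * of_nat (a+1) * c (a+1) b (e+1) k"
  "d4 (d2 c) a b e k = of_nat (k+1) * of_nat (b+1) * c a (b+1) e (k+1)"
  "d3 (d2 c) a b e k = of_nat (e+1) * of_nat (b+1) * c a (b+1) (e+1) k"
  "d4 (d1 c) a b e k = of_nat (k+1) * of_nat (a+1) * c (a+1) b e (k+1)"
  by (simp_all add: d1_def d2_def d3_def d4_def)

lemma cplx_succ_nz: "(of_nat n + 1 :: complex) \<noteq> 0"
  using of_nat_neq_0[of n, where 'a=complex] by (simp add: add.commute)

lemma stepB:
  fixes f :: coeffs4
  assumes D: "\<And>a b e k. Dco f a b e k = 0"
    and pn: "\<And>a b e. e \<le> 2 \<Longrightarrow> f a b e 0 = (if (a,b,e) = (1,0,1) then 1 else if (a,b,e) = (0,1,2) then 1/2 else 0)"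
    and rl: "\<And>a b e d. f a b e d = cnj (f e d a b)"
    and W1: "\<And>b j. f 0 b 0 j = 0" and W2: "\<And>b j. f 1 b 0 j = 0" and W3: "\<And>b j. f 0 b 1 j = 0"
  shows "\<forall>b. f 2 b 0 d = Mc 2 b 0 d \<and> f 1 b 1 d = Mc 1 b 1 d \<and> f 0 b 2 d = Mc 0 b 2 d"
proof (induction d rule: less_induct)
  case (less d)
  show ?case
  proof (cases "d = 0")
    case True then show ?thesis using pn by (simp add: Mc_def)
  next
    case False
    then obtain d' where dd: "d = d' + 1" by (metis Suc_eq_plus1 not0_implies_Suc)
    have IH1: "\<And>j b. j \<le> d' \<Longrightarrow> f 2 b 0 j = Mc 2 b 0 j" and IH2: "\<And>j b. j \<le> d' \<Longrightarrow> f 1 b 1 j = Mc 1 b 1 j"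
      and IH3: "\<And>j b. j \<le> d' \<Longrightarrow> f 0 b 2 j = Mc 0 b 2 j"
      using less.IH dd by auto
    have IHsuc: "\<And>j b. j \<le> d' \<Longrightarrow> f (Suc (Suc 0)) b 0 j = Mc (Suc (Suc 0)) b 0 j"
      "\<And>j b. j \<le> d' \<Longrightarrow> f (Suc 0) b (Suc 0) j = Mc (Suc 0) b (Suc 0) j"
      "\<And>j b. j \<le> d' \<Longrightarrow> f 0 b (Suc (Suc 0)) j = Mc 0 b (Suc (Suc 0)) j"
      using IH1 IH2 IH3 by (simp_all add: numeral_2_eq_2)
    have Wsuc: "\<And>b j. f (Suc 0) b 0 j = 0" "\<And>b j. f 0 b (Suc 0) j = 0"
      using W2 W3 by simp_all
    have S: "f 2 b 0 (d'+1) = Mc 2 b 0 (d'+1)" for b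
    proof (cases "b = 0")
      case True
      have "f 2 0 0 (d'+1) = cnj (f 0 (d'+1) 2 0)" by (rule rl)
      thus ?thesis using pn[of 2 0 "d'+1"] True by (simp add: Mc_def)
    next
      case False
      then obtain b' where bb: "b = b' + 1" by (metis Suc_eq_plus1 not0_implies_Suc)
      have "Dco f 2 b' 0 d' - Dco Mc 2 b' 0 d' = DT f 2 b' 0 d' (0,0,0,0) - DT Mc 2 b' 0 d' (0,0,0,0)"
      proof (rule Dco_diff_single)
        fix a1 b1 e1 k1 :: nat assume r: "a1 \<le> 2" "b1 \<le> b'" "e1 \<le> 0" "k1 \<le> d'" "(a1,b1,e1,k1) \<noteq> (0,0,0,0)"
        have e1: "e1 = 0" using r by simp
        consider "a1 = 0" | "a1 = 1" | "a1 = 2" using r by linarith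
        thus "DT f 2 b' 0 d' (a1,b1,e1,k1) = DT Mc 2 b' 0 d' (a1,b1,e1,k1)"
        proof cases
          case 1
          show ?thesis
          proof (cases "k1 = 0")
            case True then show ?thesis using r 1 e1 by (simp add: DT_def d_simps1 Wsuc IHsuc W1 W2 W3 pn Mc_def)
          next
            case False
            hence "d' - k1 + 1 \<le> d'" "k1 \<le> d'" using r by auto
            then show ?thesis using r 1 e1 by (simp add: DT_def d_simps1 Wsuc IHsuc W1 W2 W3 IH1 IH2 Mc_def)
          qed
        next
          case 2
          show ?thesis
          proof (cases "k1 = 0")
            case True then show ?thesis using r 2 e1 by (simp add: DT_def d_simps1 Wsuc IHsuc W1 W2 W3 pn Mc_def)
          next
            case False
            hence "d' - k1 + 1 \<le> d'" "k1 \<le> d'" using r by auto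
            then show ?thesis using r 2 e1 by (simp add: DT_def d_simps1 Wsuc IHsuc W1 W2 W3 IH1 IH2 Mc_def)
          qed
        next
          case 3
          then show ?thesis using e1 by (simp add: DT_def d_simps1 Wsuc IHsuc W1 W2 W3 Mc_def)
        qed
      qed
      moreover have "DT f 2 b' 0 d' (0,0,0,0) = (of_nat d' + 1) * (of_nat b' + 1) * f 2 (b'+1) 0 (d'+1)"
        by (simp add: DT_def d_simps1 Wsuc W1 W2 W3 pn add.commute)
      moreover have "DT Mc 2 b' 0 d' (0,0,0,0) = (of_nat d' + 1) * (of_nat b' + 1) * Mc 2 (b'+1) 0 (d'+1)"
        by (simp add: DT_def d_simps1 Mc_simps add.commute)
      ultimately have "(of_nat d' + 1) * (of_nat b' + 1) * (f 2 (b'+1) 0 (d'+1) - Mc 2 (b'+1) 0 (d'+1)) = 0"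
        using D[of 2 b' 0 d'] Dco_Mc[of 2 b' 0 d'] by (simp add: right_diff_distrib)
      thus ?thesis using bb cplx_succ_nz by simp
    qed
    have Sall: "\<And>j b. j \<le> d'+1 \<Longrightarrow> f 2 b 0 j = Mc 2 b 0 j"
      using IH1 S by (metis le_Suc_eq Suc_eq_plus1)
    have Sallsuc: "\<And>j b. j \<le> d'+1 \<Longrightarrow> f (Suc (Suc 0)) b 0 j = Mc (Suc (Suc 0)) b 0 j"
      using Sall by (simp add: numeral_2_eq_2)
    have R: "f 1 b 1 (d'+1) = Mc 1 b 1 (d'+1)" for b
    proof (cases "b = 0")
      case True
      have "f 1 0 1 (d'+1) = cnj (f 1 (d'+1) 1 0)" by (rule rl)
      thus ?thesis using pn[of 1 1 "d'+1"] True by (simp add: Mc_def)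
    next
      case False
      then obtain b' where bb: "b = b' + 1" by (metis Suc_eq_plus1 not0_implies_Suc)
      have "Dco f 1 b' 1 d' - Dco Mc 1 b' 1 d' = DT f 1 b' 1 d' (0,0,0,0) - DT Mc 1 b' 1 d' (0,0,0,0)"
      proof (rule Dco_diff_single)
        fix a1 b1 e1 k1 :: nat assume r: "a1 \<le> 1" "b1 \<le> b'" "e1 \<le> 1" "k1 \<le> d'" "(a1,b1,e1,k1) \<noteq> (0,0,0,0)"
        have ae: "a1 = 0 \<or> a1 = 1" "e1 = 0 \<or> e1 = 1" using r by auto
        show "DT f 1 b' 1 d' (a1,b1,e1,k1) = DT Mc 1 b' 1 d' (a1,b1,e1,k1)"
        proof (cases "k1 = 0")
          case True then show ?thesis using r ae
            by (elim disjE; simp add: DT_def d_simps1 Wsuc W1 W2 W3 pn Mc_def Sall Sallsuc)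
        next
          case False
          hence "d' - k1 + 1 \<le> d'" "k1 \<le> d'" using r by auto
          then show ?thesis using r ae
            by (elim disjE; simp add: DT_def d_simps1 Wsuc IHsuc W1 W2 W3 IH1 IH2 IH3 Mc_def)
        qed
      qed
      moreover have "DT f 1 b' 1 d' (0,0,0,0) = (of_nat d' + 1) * (of_nat b' + 1) * f 1 (b'+1) 1 (d'+1)"
        by (simp add: DT_def d_simps1 Wsuc W1 W2 W3 pn add.commute)
      moreover have "DT Mc 1 b' 1 d' (0,0,0,0) = (of_nat d' + 1) * (of_nat b' + 1) * Mc 1 (b'+1) 1 (d'+1)"
        by (simp add: DT_def d_simps1 Mc_simps add.commute)
      ultimately have "(of_nat d' + 1) * (of_nat b' + 1) * (f 1 (b'+1) 1 (d'+1) - Mc 1 (b'+1) 1 (d'+1)) = 0"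
        using D[of 1 b' 1 d'] Dco_Mc[of 1 b' 1 d'] by (simp add: right_diff_distrib)
      thus ?thesis using bb cplx_succ_nz by simp
    qed
    have Rall: "\<And>j b. j \<le> d'+1 \<Longrightarrow> f 1 b 1 j = Mc 1 b 1 j"
      using IH2 R by (metis le_Suc_eq Suc_eq_plus1)
    have Rallsuc: "\<And>j b. j \<le> d'+1 \<Longrightarrow> f (Suc 0) b (Suc 0) j = Mc (Suc 0) b (Suc 0) j"
      using Rall by simp
    have T: "f 0 b 2 (d'+1) = Mc 0 b 2 (d'+1)" for b
    proof (cases "b = 0")
      case True
      have "f 0 0 2 (d'+1) = cnj (f 2 (d'+1) 0 0)" by (rule rl)
      thus ?thesis using pn[of 0 2 "d'+1"] True by (simp add: Mc_def)
    next
      case False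
      then obtain b' where bb: "b = b' + 1" by (metis Suc_eq_plus1 not0_implies_Suc)
      have "Dco f 0 b' 2 d' - Dco Mc 0 b' 2 d' = DT f 0 b' 2 d' (0,0,0,0) - DT Mc 0 b' 2 d' (0,0,0,0)"
      proof (rule Dco_diff_single)
        fix a1 b1 e1 k1 :: nat assume r: "a1 \<le> 0" "b1 \<le> b'" "e1 \<le> 2" "k1 \<le> d'" "(a1,b1,e1,k1) \<noteq> (0,0,0,0)"
        have ae: "a1 = 0" "e1 = 0 \<or> e1 = 1 \<or> e1 = 2" using r by auto
        show "DT f 0 b' 2 d' (a1,b1,e1,k1) = DT Mc 0 b' 2 d' (a1,b1,e1,k1)"
        proof (cases "k1 = 0")
          case True then show ?thesis using r ae
            by (elim disjE; simp add: DT_def d_simps1 Wsuc W1 W2 W3 pn Mc_def Rall Rallsuc)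
        next
          case False
          hence "d' - k1 + 1 \<le> d'" "k1 \<le> d'" using r by auto
          then show ?thesis using r ae
            by (elim disjE; simp add: DT_def d_simps1 Wsuc IHsuc W1 W2 W3 IH1 IH2 IH3 Mc_def)
        qed
      qed
      moreover have "DT f 0 b' 2 d' (0,0,0,0) = (of_nat d' + 1) * (of_nat b' + 1) * f 0 (b'+1) 2 (d'+1)"
        by (simp add: DT_def d_simps1 Wsuc W1 W2 W3 pn add.commute)
      moreover have "DT Mc 0 b' 2 d' (0,0,0,0) = (of_nat d' + 1) * (of_nat b' + 1) * Mc 0 (b'+1) 2 (d'+1)"
        by (simp add: DT_def d_simps1 Mc_simps add.commute)
      ultimately have "(of_nat d' + 1) * (of_nat b' + 1) * (f 0 (b'+1) 2 (d'+1) - Mc 0 (b'+1) 2 (d'+1)) = 0"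
        using D[of 0 b' 2 d'] Dco_Mc[of 0 b' 2 d'] by (simp add: right_diff_distrib)
      thus ?thesis using bb cplx_succ_nz by simp
    qed
    show ?thesis using S R T dd by simp
  qed
qed

lemma conv_mono: "conv_on c r \<Longrightarrow> 0 < \<rho> \<Longrightarrow> \<rho> \<le> r \<Longrightarrow> conv_on c \<rho>"
  unfolding conv_on_def by auto

theorem proposition5p7:
  fixes F :: "complex \<Rightarrow> complex \<Rightarrow> real" and f :: coeffs4 and r :: real
  assumes analytic: "conv_on f r"
    and repr: "\<And>z \<zeta>. norm z < r \<Longrightarrow> norm \<zeta> < r \<Longrightarrow>
                 complex_of_real (F z \<zeta>) = pser4 f z \<zeta> (cnj z) (cnj \<zeta>)"
    and levi_rank1: "\<exists>\<delta>>0. \<forall>z \<zeta>. norm z < \<delta> \<and> norm \<zeta> < \<delta> \<longrightarrow>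
           d13 (pser4 f) z \<zeta> * d24 (pser4 f) z \<zeta> - d23 (pser4 f) z \<zeta> * d14 (pser4 f) z \<zeta> = 0
           \<and> (d13 (pser4 f) z \<zeta>, d24 (pser4 f) z \<zeta>, d23 (pser4 f) z \<zeta>, d14 (pser4 f) z \<zeta>) \<noteq> (0,0,0,0)"
    and prenormalized: "\<And>a b e. e \<le> 2 \<Longrightarrow>
           f a b e 0 = (if (a,b,e) = (1,0,1) then 1 else if (a,b,e) = (0,1,2) then 1/2 else 0)"
  shows "\<exists>g \<rho>. conv_on g \<rho> \<and> (\<forall>a b e d. a + e < 3 \<longrightarrow> g a b e d = 0) \<and>
           (\<forall>z \<zeta>. norm z < \<rho> \<and> norm \<zeta> < \<rho> \<longrightarrow>
              complex_of_real (F z \<zeta>) - mfun z \<zeta> = pser4 g z \<zeta> (cnj z) (cnj \<zeta>))"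
proof -
  have rl: "\<And>a b e d. f a b e d = cnj (f e d a b)"
    using reality[OF analytic repr] by blast
  have levi: "\<exists>\<delta>>0. \<forall>z \<zeta>. norm z < \<delta> \<and> norm \<zeta> < \<delta> \<longrightarrow>
           d13 (pser4 f) z \<zeta> * d24 (pser4 f) z \<zeta> - d23 (pser4 f) z \<zeta> * d14 (pser4 f) z \<zeta> = 0"
    using levi_rank1 by blast
  have D: "\<And>a b e k. Dco f a b e k = 0" using Dco_zero[OF analytic levi] by blast
  have A: "\<And>d. \<forall>b. f 0 b 0 d = 0 \<and> f 1 b 0 d = 0 \<and> f 0 b 1 d = 0"
    by (rule stepA[OF D prenormalized rl])
  have W1: "\<And>b j. f 0 b 0 j = 0" and W2: "\<And>b j. f 1 b 0 j = 0" and W3: "\<And>b j. f 0 b 1 j = 0"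
    using A by auto
  have B: "\<And>d. \<forall>b. f 2 b 0 d = Mc 2 b 0 d \<and> f 1 b 1 d = Mc 1 b 1 d \<and> f 0 b 2 d = Mc 0 b 2 d"
    by (rule stepB[OF D prenormalized rl W1 W2 W3])
  have r0: "0 < r" using analytic conv_on_pos by blast
  define \<rho> where "\<rho> = min r 1"
  have \<rho>: "0 < \<rho>" "\<rho> \<le> r" "\<rho> \<le> 1" using r0 by (auto simp: \<rho>_def)
  have cf: "conv_on f \<rho>" by (rule conv_mono[OF analytic \<rho>(1,2)])
  have cM: "conv_on Mc \<rho>" by (rule conv_mono[OF conv_Mc \<rho>(1,3)])
  show ?thesis
  proof (intro exI conjI allI impI)
    show "conv_on (cdiff f Mc) \<rho>" by (rule conv_diff[OF cf cM])
  next
    fix a b e d :: nat assume ae: "a + e < 3"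
    hence "(a = 0 \<and> e = 0) \<or> (a = 1 \<and> e = 0) \<or> (a = 0 \<and> e = 1) \<or> (a = 2 \<and> e = 0) \<or> (a = 1 \<and> e = 1) \<or> (a = 0 \<and> e = 2)"
      by auto
    moreover have "f 2 b 0 d = Mc 2 b 0 d" "f 1 b 1 d = Mc 1 b 1 d" "f 0 b 2 d = Mc 0 b 2 d"
      using B[of d] by auto
    moreover have "f (Suc 0) b 0 d = 0" "f 0 b (Suc 0) d = 0" using W2 W3 by simp_all
    ultimately show "cdiff f Mc a b e d = 0"
      by (elim disjE; simp add: cdiff_def W1 W2 W3 Mc_simps)
  next
    fix z \<zeta> :: complex assume n: "norm z < \<rho> \<and> norm \<zeta> < \<rho>"
    have p: "poly4 \<rho> z \<zeta> (cnj z) (cnj \<zeta>)" using n by (simp add: poly4_def)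
    have p1: "poly4 1 z \<zeta> (cnj z) (cnj \<zeta>)" using n \<rho> by (auto simp: poly4_def)
    have "complex_of_real (F z \<zeta>) = pser4 f z \<zeta> (cnj z) (cnj \<zeta>)" using repr n \<rho> by auto
    moreover have "mfun z \<zeta> = pser4 Mc z \<zeta> (cnj z) (cnj \<zeta>)" by (simp add: mfun_m4 pser_Mc[OF p1])
    ultimately show "complex_of_real (F z \<zeta>) - mfun z \<zeta> = pser4 (cdiff f Mc) z \<zeta> (cnj z) (cnj \<zeta>)"
      by (simp add: pser4_diff[OF cf cM p])
  qed
qed

end
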